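(* Let $\alpha>0$ and $0\le m<s<M$, and let $f\in\mathcal{F}(m,M,s)$. Put $l=\pi(s-m)/(M-m)\in(0,\pi)$ and $\delta=m/(M-m)\ge 0$. Then $$\operatorname{osc}(u_f)\le (M-m)\,\Theta_\alpha(l,\delta).$$ Equality holds if and only if $f(x)=f_0(x)$ a.e. on $[-\pi,\pi]$ or $f(x)=f_0(-x)$ a.e. on $[-\pi,\pi]$, where $f_0=m+(M-m)\chi_{I(a_g,l)}$.
   Context: Robin problem: for $\alpha>0$ and $f\in L^1[-\pi,\pi]$, find $u\in C^1[-\pi,\pi]$ with $u'$ absolutely continuous on $[-\pi,\pi]$, $-u''=f$ a.e. on $(-\pi,\pi)$, and $-u'(-\pi)+\alpha u(-\pi)=u'(\pi)+\alpha u(\pi)=0$. It has a unique solution, denoted $u_f$; explicitly $u_f(x)=\int_{-\pi}^{\pi}G(x,y)f(y)\,dy$ with $G(x,y)=-\tfrac12 c_\alpha xy-\tfrac12|x-y|+\tfrac{1}{2c_\alpha}$, where $c_\alpha=\alpha/(1+\alpha\pi)$. For $0\le m<s<M$, $\mathcal{F}(m,M,s)$ is the set of $f\in L^1[-\pi,\pi]$ with $m\le f\le M$ on $[-\pi,\pi]$ and $\|f\|_{L^1}=2\pi s$. For a function $u$ on $[-\pi,\pi]$, $\operatorname{osc}(u)=\max_{[-\pi,\pi]}u-\min_{[-\pi,\pi]}u$. $I(a,l)=[a-l,a+l]$ and $\chi_E$ is the characteristic function of $E$. Parameters (for $l\in(0,\pi)$, $\delta\ge0$, $\alpha>0$): $a_0=\dfrac{(1+\delta)l}{(1+\alpha\pi)(\delta+2lc_\alpha-l^2c_\alpha^2)}$.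 If $(1+\delta)l>\delta(\pi-l)$, let $\alpha_0$ be the unique positive root of $$(\pi^2\delta+2\pi l-l^2)\alpha^2+\frac{2(\pi\delta+l)(\pi-l)-\pi l(1+\delta)}{\pi-l}\,\alpha+\delta-\frac{(1+\delta)l}{\pi-l}=0,$$ and set $\alpha_g=\alpha_0$. If $(1+\delta)l\le\delta(\pi-l)$, set $\alpha_g=0$. $a_g=\pi-l$ if $0<\alpha\le\alpha_g$, and $a_g=a_0$ if $\alpha>\alpha_g$. $\Theta_\alpha(l,\delta)=\dfrac12\,\dfrac{(1+\delta)l^2}{(\pi^2\delta+2\pi l-l^2)\alpha^2+2(\pi\delta+l)\alpha+\delta}+\pi l+\dfrac{\pi^2\delta}{2}-\dfrac{l^2}{2}$ if $\alpha>\alpha_g$. $\Theta_\alpha(l,\delta)=\dfrac12\,\dfrac{(l^2c_\alpha^2-2lc_\alpha-\delta)(\pi-l)^2}{1+\delta}+\dfrac{l(\pi-l)}{1+\alpha\pi}+\pi l+\dfrac{\pi^2\delta}{2}-\dfrac{l^2}{2}$ if $0<\alpha\le\alpha_g$. *)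

theory Defs
  imports "HOL-Analysis.Analysis"
begin

definition c_alpha :: "real \<Rightarrow> real" where
  "c_alpha \<alpha> = \<alpha> / (1 + \<alpha> * pi)"

definition green :: "real \<Rightarrow> real \<Rightarrow> real \<Rightarrow> real" where
  "green \<alpha> x y = - (1/2) * c_alpha \<alpha> * x * y - (1/2) * \<bar>x - y\<bar> + 1 / (2 * c_alpha \<alpha>)"

definition robin_sol :: "real \<Rightarrow> (real \<Rightarrow> real) \<Rightarrow> real \<Rightarrow> real" where
  "robin_sol \<alpha> f x = integral\<^sup>L (lebesgue_on {-pi..pi}) (\<lambda>y. green \<alpha> x y * f y)"

definition osc :: "(real \<Rightarrow> real) \<Rightarrow> real" where
  "osc u = Sup (u ` {-pi..pi}) - Inf (u ` {-pi..pi})"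

definition admissible :: "real \<Rightarrow> real \<Rightarrow> real \<Rightarrow> (real \<Rightarrow> real) \<Rightarrow> bool" where
  "admissible m M s f \<longleftrightarrow>
     integrable (lebesgue_on {-pi..pi}) f \<and>
     (AE x in lebesgue_on {-pi..pi}. m \<le> f x \<and> f x \<le> M) \<and>
     integral\<^sup>L (lebesgue_on {-pi..pi}) (\<lambda>x. \<bar>f x\<bar>) = 2 * pi * s"

definition a0 :: "real \<Rightarrow> real \<Rightarrow> real \<Rightarrow> real" where
  "a0 \<alpha> l \<delta> = (1 + \<delta>) * l /
     ((1 + \<alpha> * pi) * (\<delta> + 2 * l * c_alpha \<alpha> - l^2 * (c_alpha \<alpha>)^2))"

definition alpha0_poly :: "real \<Rightarrow> real \<Rightarrow> real \<Rightarrow> real" where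
  "alpha0_poly l \<delta> a =
     (pi^2 * \<delta> + 2 * pi * l - l^2) * a^2
     + ((2 * (pi * \<delta> + l) * (pi - l) - pi * l * (1 + \<delta>)) / (pi - l)) * a
     + \<delta> - (1 + \<delta>) * l / (pi - l)"

definition alpha0 :: "real \<Rightarrow> real \<Rightarrow> real" where
  "alpha0 l \<delta> = (THE a. a > 0 \<and> alpha0_poly l \<delta> a = 0)"

definition alpha_g :: "real \<Rightarrow> real \<Rightarrow> real" where
  "alpha_g l \<delta> = (if (1 + \<delta>) * l > \<delta> * (pi - l) then alpha0 l \<delta> else 0)"

definition a_g :: "real \<Rightarrow> real \<Rightarrow> real \<Rightarrow> real" where
  "a_g \<alpha> l \<delta> = (if \<alpha> \<le> alpha_g l \<delta> then pi - l else a0 \<alpha> l \<delta>)"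

definition Theta :: "real \<Rightarrow> real \<Rightarrow> real \<Rightarrow> real" where
  "Theta \<alpha> l \<delta> =
     (if \<alpha> > alpha_g l \<delta> then
        (1/2) * ((1 + \<delta>) * l^2 /
          ((pi^2 * \<delta> + 2 * pi * l - l^2) * \<alpha>^2 + 2 * (pi * \<delta> + l) * \<alpha> + \<delta>))
        + pi * l + pi^2 * \<delta> / 2 - l^2 / 2
      else
        (1/2) * ((l^2 * (c_alpha \<alpha>)^2 - 2 * l * c_alpha \<alpha> - \<delta>) * (pi - l)^2 / (1 + \<delta>))
        + l * (pi - l) / (1 + \<alpha> * pi) + pi * l + pi^2 * \<delta> / 2 - l^2 / 2)"

end

theory Submission
  imports Defs
begin

lemma ftc_on:
  fixes F \<phi> :: "real \<Rightarrow> real"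
  assumes "-pi \<le> p" "p \<le> q" "q \<le> pi"
    and F: "\<And>y. p \<le> y \<Longrightarrow> y \<le> q \<Longrightarrow> (F has_real_derivative \<phi> y) (at y)"
    and c: "continuous_on UNIV \<phi>"
  shows "integral\<^sup>L (lebesgue_on {-pi..pi}) (\<lambda>y. \<phi> y * indicator {p..q} y) = F q - F p"
proof -
  have "integral\<^sup>L (lebesgue_on {-pi..pi}) (\<lambda>y. \<phi> y * indicator {p..q} y)
      = integral\<^sup>L lebesgue (\<lambda>y. indicator {-pi..pi} y *\<^sub>R (\<phi> y * indicator {p..q} y))"
    by (rule integral_restrict_space) auto
  also have "\<dots> = integral\<^sup>L lebesgue (\<lambda>y. indicator {p..q} y *\<^sub>R \<phi> y)"
    using assms(1-3) by (intro Bochner_Integration.integral_cong) (auto simp: indicator_def)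
  also have "\<dots> = integral\<^sup>L lborel (\<lambda>y. indicator {p..q} y *\<^sub>R \<phi> y)"
  proof (intro integral_completion)
    have [measurable]: "\<phi> \<in> borel_measurable borel" using c by (rule borel_measurable_continuous_onI)
    show "(\<lambda>y. indicator {p..q} y *\<^sub>R \<phi> y) \<in> borel_measurable lborel" by measurable
  qed
  also have "\<dots> = F q - F p"
    apply (rule integral_FTC_atLeastAtMost[OF assms(2)])
    using F apply (simp add: has_real_derivative_iff_has_vector_derivative[symmetric] has_field_derivative_at_within)
    using c continuous_on_subset by blast
  finally show ?thesis .
qed


lemma deriv_xabs: "((\<lambda>y. y * \<bar>y\<bar>) has_real_derivative 2 * \<bar>z\<bar>) (at z)"
proof (cases "z = 0")
  case True
  have l: "((\<lambda>h::real. \<bar>h\<bar>) \<longlongrightarrow> 0) (at 0)"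
    using tendsto_rabs_zero[OF tendsto_ident_at[of "0::real" UNIV]] by simp
  have ev: "\<forall>\<^sub>F h in at 0. \<bar>h\<bar> = ((0 + h) * \<bar>0 + h\<bar> - 0 * \<bar>0\<bar>) / (h::real)"
    by (auto simp: eventually_at_filter)
  have "((\<lambda>h. ((0 + h) * \<bar>0 + h\<bar> - 0 * \<bar>0\<bar>) / h) \<longlongrightarrow> 0) (at (0::real))"
    by (rule Lim_transform_eventually[OF l ev])
  then show ?thesis using True by (simp add: DERIV_def)
next
  case False
  show ?thesis
  proof (cases "z > 0")
    case True
    have "((\<lambda>y. y * y) has_real_derivative 2 * \<bar>z\<bar>) (at z)"
      using DERIV_mult[OF DERIV_ident DERIV_ident, of z] True by simp
    then show ?thesis
      by (rule has_field_derivative_transform_within_open[where S = "{0<..}"]) (use True in auto)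
  next
    case f2: False
    then have z: "z < 0" using False by simp
    have "((\<lambda>y. - (y * y)) has_real_derivative 2 * \<bar>z\<bar>) (at z)"
      using DERIV_minus[OF DERIV_mult[OF DERIV_ident DERIV_ident, of z]] z by simp
    then show ?thesis
      by (rule has_field_derivative_transform_within_open[where S = "{..<0}"]) (use z in auto)
  qed
qed

definition kap :: "real \<Rightarrow> real \<Rightarrow> real \<Rightarrow> real" where
  "kap x k y = pi/2 - \<bar>x - y\<bar>/2 + k*y/2"

lemma kap_cont: "continuous_on UNIV (kap x k)"
  unfolding kap_def by (intro continuous_intros) auto

lemma int_kap:
  assumes "-pi \<le> p" "p \<le> q" "q \<le> pi"
  shows "integral\<^sup>L (lebesgue_on {-pi..pi}) (\<lambda>y. kap x k y * indicator {p..q} y)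
       = (q-p)*pi/2 - ((q-x)*\<bar>q-x\<bar> - (p-x)*\<bar>p-x\<bar>)/4 + k*(q^2-p^2)/4"
proof -
  define F where "F y = pi*y/2 - (y-x)*\<bar>y-x\<bar>/4 + k*y^2/4" for y
  have "integral\<^sup>L (lebesgue_on {-pi..pi}) (\<lambda>y. kap x k y * indicator {p..q} y) = F q - F p"
  proof (rule ftc_on[OF assms _ kap_cont])
    fix y
    have d: "((\<lambda>y. (y-x) * \<bar>y-x\<bar>) has_real_derivative 2 * \<bar>y - x\<bar> * 1) (at y)"
    proof -
      have "((\<lambda>y. y - x) has_real_derivative 1) (at y)" by (auto intro!: derivative_eq_intros)
      from DERIV_chain2[OF deriv_xabs[of "y-x"] this] show ?thesis by simp
    qed
    have d1: "((\<lambda>y. pi*y/2) has_real_derivative pi/2) (at y)" by (auto intro!: derivative_eq_intros)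
    have d2: "((\<lambda>y. (y-x)*\<bar>y-x\<bar>/4) has_real_derivative (2*\<bar>y-x\<bar>*1)/4) (at y)"
      using DERIV_cdivide[OF d, of 4] by simp
    have d3: "((\<lambda>y. k*y^2/4) has_real_derivative k*(2*y)/4) (at y)" by (auto intro!: derivative_eq_intros)
    have "(F has_real_derivative pi/2 - (2*\<bar>y-x\<bar>*1)/4 + k*(2*y)/4) (at y)"
      unfolding F_def by (intro DERIV_add DERIV_diff d1 d2 d3)
    then show "(F has_real_derivative kap x k y) (at y)"
      by (rule DERIV_cong) (simp add: kap_def abs_minus_commute field_simps)
  qed
  then show ?thesis by (simp add: F_def algebra_simps power2_eq_square) argo
qed

lemma int_ind:
  assumes "-pi \<le> p" "p \<le> q" "q \<le> pi"
  shows "integral\<^sup>L (lebesgue_on {-pi..pi}) (\<lambda>y. indicator {p..q} y) = q - p"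
  using ftc_on[OF assms, of "\<lambda>y. y" "\<lambda>_. 1"] by (auto intro!: derivative_eq_intros)

lemma on_space_ind: "integral\<^sup>L (lebesgue_on {-pi..pi}) (\<lambda>y. (h::real\<Rightarrow>real) y) = integral\<^sup>L (lebesgue_on {-pi..pi}) (\<lambda>y. h y * indicator {-pi..pi} y)"
  by (rule Bochner_Integration.integral_cong) auto

lemma int_kap_full: "x \<in> {-pi..pi} \<Longrightarrow> integral\<^sup>L (lebesgue_on {-pi..pi}) (kap x k) = (pi^2 - x^2)/2"
proof -
  assume x: "x \<in> {-pi..pi}"
  have a: "\<bar>pi - x\<bar> = pi - x" "\<bar>-pi - x\<bar> = pi + x" using x by auto
  show ?thesis using int_kap[of "-pi" pi x k] on_space_ind[of "kap x k"]
    by (simp add: a power2_eq_square field_simps)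
qed

lemma int_one: "integral\<^sup>L (lebesgue_on {-pi..pi}) (\<lambda>y. 1) = 2*pi"
  using int_ind[of "-pi" pi] on_space_ind[of "\<lambda>_. 1"] by simp

lemma meas_borel: "(\<phi>::real\<Rightarrow>real) \<in> borel_measurable borel \<Longrightarrow> \<phi> \<in> borel_measurable (lebesgue_on S)"
  by (intro measurable_restrict_space1 measurable_completion) simp

lemma int_bnd:
  fixes f \<phi> :: "real \<Rightarrow> real"
  assumes "integrable (lebesgue_on {-pi..pi}) f" "\<phi> \<in> borel_measurable borel"
    and "\<And>y. y \<in> {-pi..pi} \<Longrightarrow> \<bar>\<phi> y\<bar> \<le> B"
  shows "integrable (lebesgue_on {-pi..pi}) (\<lambda>y. \<phi> y * f y)"
proof (rule Bochner_Integration.integrable_bound[where f = "\<lambda>y. B * f y"])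
  show "integrable (lebesgue_on {-pi..pi}) (\<lambda>y. B * f y)" using assms(1) by simp
  show "(\<lambda>y. \<phi> y * f y) \<in> borel_measurable (lebesgue_on {-pi..pi})"
    using meas_borel[OF assms(2)] borel_measurable_integrable[OF assms(1)] by measurable
  show "AE y in lebesgue_on {-pi..pi}. norm (\<phi> y * f y) \<le> norm (B * f y)"
  proof (rule AE_I2)
    fix y assume "y \<in> space (lebesgue_on {-pi..pi})"
    then have "\<bar>\<phi> y\<bar> \<le> B" using assms(3) by simp
    then show "norm (\<phi> y * f y) \<le> norm (B * f y)"
      by (simp add: abs_mult mult_right_mono)
  qed
qed

lemma int_bnd_ind:
  fixes \<phi> :: "real \<Rightarrow> real"
  assumes "\<phi> \<in> borel_measurable borel"
    and "\<And>y. y \<in> {-pi..pi} \<Longrightarrow> \<bar>\<phi> y\<bar> \<le> B"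
  shows "integrable (lebesgue_on {-pi..pi}) \<phi>"
proof -
  have "integrable (lebesgue_on {-pi..pi}) (\<lambda>y. 1::real)" by simp
  from int_bnd[OF this assms] show ?thesis by simp
qed

lemma kap_meas[measurable]: "kap x k \<in> borel_measurable borel"
  using kap_cont by (rule borel_measurable_continuous_onI)

lemma kap_bnd: "y \<in> {-pi..pi} \<Longrightarrow> x \<in> {-pi..pi} \<Longrightarrow> \<bar>kap x k y\<bar> \<le> pi/2 + pi + \<bar>k\<bar>*pi/2"
proof -
  assume y: "y \<in> {-pi..pi}" and x: "x \<in> {-pi..pi}"
  have "\<bar>k*y\<bar> \<le> \<bar>k\<bar>*pi" using y by (auto simp: abs_mult intro!: mult_left_mono)
  then have "-(\<bar>k\<bar>*pi) \<le> k*y \<and> k*y \<le> \<bar>k\<bar>*pi" by (simp add: abs_le_iff)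
  moreover have "\<bar>x - y\<bar> \<le> 2*pi" using x y by auto
  moreover have "\<bar>x - y\<bar> \<ge> 0" by simp
  ultimately show ?thesis unfolding kap_def by (intro abs_leI) argo+
qed


abbreviation "LL \<equiv> lebesgue_on {-pi..pi::real}"

lemma bnd:
  fixes f \<phi> :: "real \<Rightarrow> real"
  assumes fi: "integrable LL f" and ae: "AE y in LL. m \<le> f y \<and> f y \<le> M"
    and intf: "integral\<^sup>L LL f = 2*pi * s"
    and pq: "-pi \<le> p" "p \<le> q" "q \<le> pi" "(M - m)*(q - p) = 2*pi*(s - m)"
    and \<phi>m: "\<phi> \<in> borel_measurable borel" and \<phi>b: "\<And>y. y\<in>{-pi..pi} \<Longrightarrow> \<bar>\<phi> y\<bar> \<le> B"
    and th1: "\<And>y. y \<in> {p..q} \<Longrightarrow> t \<le> \<phi> y"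
    and th2: "\<And>y. y \<in> {-pi..pi} \<Longrightarrow> y \<notin> {p..q} \<Longrightarrow> \<phi> y \<le> t"
  shows "integral\<^sup>L LL (\<lambda>y. \<phi> y * f y) \<le> m * integral\<^sup>L LL \<phi> + (M-m) * integral\<^sup>L LL (\<lambda>y. \<phi> y * indicator {p..q} y)"
    and "integral\<^sup>L LL (\<lambda>y. \<phi> y * f y) = m * integral\<^sup>L LL \<phi> + (M-m) * integral\<^sup>L LL (\<lambda>y. \<phi> y * indicator {p..q} y)
         \<Longrightarrow> AE y in LL. \<phi> y = t \<or> f y = m + (M-m) * indicator {p..q} y"
proof -
  define g where "g y = (\<phi> y - t) * (m + (M-m) * indicator {p..q} y - f y)" for y
  have i1: "integrable LL \<phi>" by (rule int_bnd_ind[OF \<phi>m \<phi>b])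
  have im: "indicator {p..q} \<in> borel_measurable (borel :: real measure)" by measurable
  have i2: "integrable LL (\<lambda>y. \<phi> y * indicator {p..q} y)"
  proof (rule int_bnd_ind[where B = B])
    have B0: "0 \<le> B" using \<phi>b[of 0] pi_ge_zero by force
    show "\<bar>\<phi> y * indicator {p..q} y\<bar> \<le> B" if "y \<in> {-pi..pi}" for y
      using \<phi>b[OF that] B0 by (auto simp: indicator_def)
  qed (use \<phi>m in measurable)
  have i3: "integrable LL (\<lambda>y. \<phi> y * f y)" by (rule int_bnd[OF fi \<phi>m \<phi>b])
  have i4: "integrable LL (\<lambda>y. indicator {p..q} y :: real)"
    by (rule int_bnd_ind[where B = 1]) (use im in \<open>auto simp: indicator_def\<close>)
  have i5: "integrable LL (\<lambda>y. 1::real)" by simp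
  have geq: "g = (\<lambda>y. (m * \<phi> y + (M-m) * (\<phi> y * indicator {p..q} y) - \<phi> y * f y)
       - (t * m * 1 + t * (M-m) * indicator {p..q} y - t * f y))"
    by (auto simp: g_def fun_eq_iff algebra_simps)
  have ig: "integrable LL g" unfolding geq using i1 i2 i3 i4 i5 fi by auto
  have "integral\<^sup>L LL g = (m * integral\<^sup>L LL \<phi> + (M-m) * integral\<^sup>L LL (\<lambda>y. \<phi> y * indicator {p..q} y) - integral\<^sup>L LL (\<lambda>y. \<phi> y * f y))
       - (t * m * integral\<^sup>L LL (\<lambda>y. 1) + t * (M-m) * integral\<^sup>L LL (\<lambda>y. indicator {p..q} y) - t * integral\<^sup>L LL f)"
    unfolding geq using i1 i2 i3 i4 i5 fi by simp
  also have "\<dots> = m * integral\<^sup>L LL \<phi> + (M-m) * integral\<^sup>L LL (\<lambda>y. \<phi> y * indicator {p..q} y) - integral\<^sup>L LL (\<lambda>y. \<phi> y * f y)"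
  proof -
    have "t * m * integral\<^sup>L LL (\<lambda>y. 1) + t * (M-m) * integral\<^sup>L LL (\<lambda>y. indicator {p..q} y) - t * integral\<^sup>L LL f
        = t * (m * (2*pi) + (M-m)*(q-p) - 2*pi * s)"
      unfolding int_one int_ind[OF pq(1-3)] intf by (simp add: algebra_simps)
    also have "\<dots> = 0" using pq(4) by (simp add: algebra_simps)
    finally show ?thesis by simp
  qed
  finally have gint: "integral\<^sup>L LL g = m * integral\<^sup>L LL \<phi> + (M-m) * integral\<^sup>L LL (\<lambda>y. \<phi> y * indicator {p..q} y) - integral\<^sup>L LL (\<lambda>y. \<phi> y * f y)" .
  have gpos: "AE y in LL. 0 \<le> g y"
    using ae
  proof (rule lebesgue_on_mono)
    fix y assume f: "m \<le> f y \<and> f y \<le> M" and y: "y \<in> {-pi..pi}"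
    show "0 \<le> g y"
    proof (cases "y \<in> {p..q}")
      case True
      then show ?thesis using th1[OF True] f by (simp add: g_def)
    next
      case False
      then have "\<phi> y - t \<le> 0" using th2[OF y False] by simp
      moreover have "m + (M-m) * indicator {p..q} y - f y \<le> 0" using False f by simp
      ultimately show ?thesis unfolding g_def by (simp add: mult_nonpos_nonpos)
    qed
  qed
  have "0 \<le> integral\<^sup>L LL g" using gpos by (rule integral_nonneg_AE)
  then show "integral\<^sup>L LL (\<lambda>y. \<phi> y * f y) \<le> m * integral\<^sup>L LL \<phi> + (M-m) * integral\<^sup>L LL (\<lambda>y. \<phi> y * indicator {p..q} y)"
    using gint by simp
  assume "integral\<^sup>L LL (\<lambda>y. \<phi> y * f y) = m * integral\<^sup>L LL \<phi> + (M-m) * integral\<^sup>L LL (\<lambda>y. \<phi> y * indicator {p..q} y)"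
  then have "integral\<^sup>L LL g = 0" using gint by simp
  then have "AE y in LL. g y = 0" using integral_nonneg_eq_0_iff_AE[OF ig gpos] by simp
  then show "AE y in LL. \<phi> y = t \<or> f y = m + (M-m) * indicator {p..q} y"
    by eventually_elim (auto simp: g_def)
qed


lemma green_cont: "continuous_on UNIV (green \<alpha> x)"
  unfolding green_def by (intro continuous_intros) auto

lemma green_meas[measurable]: "green \<alpha> x \<in> borel_measurable borel"
  using green_cont by (rule borel_measurable_continuous_onI)

lemma green_bnd:
  assumes "x \<in> {-pi..pi}" "y \<in> {-pi..pi}"
  shows "\<bar>green \<alpha> x y\<bar> \<le> \<bar>c_alpha \<alpha>\<bar> * pi * pi / 2 + pi + \<bar>1 / (2 * c_alpha \<alpha>)\<bar>"
proof -
  have "\<bar>x * y\<bar> \<le> pi * pi" using assms by (auto simp: abs_mult intro!: mult_mono)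
  then have "\<bar>c_alpha \<alpha> * (x * y)\<bar> \<le> \<bar>c_alpha \<alpha>\<bar> * (pi * pi)"
    by (simp add: abs_mult mult_left_mono)
  then have 1: "\<bar>- (1/2) * c_alpha \<alpha> * x * y\<bar> \<le> \<bar>c_alpha \<alpha>\<bar> * pi * pi / 2"
    by (simp add: abs_mult mult.assoc)
  have 2: "\<bar>(1/2) * \<bar>x - y\<bar>\<bar> \<le> pi" using assms by auto
  show ?thesis unfolding green_def
    using 1 2 abs_triangle_ineq[of "- (1/2) * c_alpha \<alpha> * x * y - (1/2) * \<bar>x - y\<bar>" "1 / (2 * c_alpha \<alpha>)"]
      abs_triangle_ineq4[of "- (1/2) * c_alpha \<alpha> * x * y" "(1/2) * \<bar>x - y\<bar>"]
    by argo
qed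

lemma green_int:
  assumes "integrable LL f" "x \<in> {-pi..pi}"
  shows "integrable LL (\<lambda>y. green \<alpha> x y * f y)"
  by (rule int_bnd[OF assms(1) green_meas green_bnd[OF assms(2)]])

lemma u_diff:
  assumes "integrable LL f" "x \<in> {-pi..pi}" "z \<in> {-pi..pi}"
  shows "robin_sol \<alpha> f x - robin_sol \<alpha> f z = integral\<^sup>L LL (\<lambda>y. (green \<alpha> x y - green \<alpha> z y) * f y)"
  unfolding robin_sol_def left_diff_distrib
  by (rule Bochner_Integration.integral_diff[symmetric]) (use green_int assms in auto)

lemma c_pos: "\<alpha> > 0 \<Longrightarrow> c_alpha \<alpha> > 0"
  unfolding c_alpha_def by (simp add: pos_add_strict)

lemma u_minus:
  assumes "integrable LL f" "x \<in> {-pi..pi}"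
  shows "robin_sol \<alpha> f x - robin_sol \<alpha> f (-pi) = integral\<^sup>L LL (\<lambda>y. kap x (1 - c_alpha \<alpha> * (pi + x)) y * f y)"
proof -
  have "robin_sol \<alpha> f x - robin_sol \<alpha> f (-pi) = integral\<^sup>L LL (\<lambda>y. (green \<alpha> x y - green \<alpha> (-pi) y) * f y)"
    by (rule u_diff) (use assms in auto)
  also have "\<dots> = integral\<^sup>L LL (\<lambda>y. kap x (1 - c_alpha \<alpha> * (pi + x)) y * f y)"
  proof (rule Bochner_Integration.integral_cong[OF refl])
    fix y assume "y \<in> space LL"
    then have "\<bar>-pi - y\<bar> = pi + y" by auto
    then have "green \<alpha> x y - green \<alpha> (-pi) y = kap x (1 - c_alpha \<alpha> * (pi + x)) y"
      unfolding green_def kap_def by (simp add: field_simps)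
    then show "(green \<alpha> x y - green \<alpha> (-pi) y) * f y = kap x (1 - c_alpha \<alpha> * (pi + x)) y * f y"
      by simp
  qed
  finally show ?thesis .
qed

lemma u_plus:
  assumes "integrable LL f" "x \<in> {-pi..pi}"
  shows "robin_sol \<alpha> f x - robin_sol \<alpha> f pi = integral\<^sup>L LL (\<lambda>y. kap x (- (1 - c_alpha \<alpha> * (pi - x))) y * f y)"
proof -
  have "robin_sol \<alpha> f x - robin_sol \<alpha> f pi = integral\<^sup>L LL (\<lambda>y. (green \<alpha> x y - green \<alpha> pi y) * f y)"
    by (rule u_diff) (use assms in auto)
  also have "\<dots> = integral\<^sup>L LL (\<lambda>y. kap x (- (1 - c_alpha \<alpha> * (pi - x))) y * f y)"
  proof (rule Bochner_Integration.integral_cong[OF refl])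
    fix y assume "y \<in> space LL"
    then have "\<bar>pi - y\<bar> = pi - y" by auto
    then have "green \<alpha> x y - green \<alpha> pi y = kap x (- (1 - c_alpha \<alpha> * (pi - x))) y"
      unfolding green_def kap_def by (simp add: field_simps)
    then show "(green \<alpha> x y - green \<alpha> pi y) * f y = kap x (- (1 - c_alpha \<alpha> * (pi - x))) y * f y"
      by simp
  qed
  finally show ?thesis .
qed

lemma u_lip:
  assumes "integrable LL f" "x \<in> {-pi..pi}" "z \<in> {-pi..pi}" "\<alpha> > 0"
  shows "\<bar>robin_sol \<alpha> f x - robin_sol \<alpha> f z\<bar> \<le> ((c_alpha \<alpha> * pi + 1)/2 * integral\<^sup>L LL (\<lambda>y. \<bar>f y\<bar>)) * \<bar>x - z\<bar>"
proof -
  have c: "c_alpha \<alpha> > 0" using c_pos assms(4) .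
  have "\<bar>robin_sol \<alpha> f x - robin_sol \<alpha> f z\<bar> = \<bar>integral\<^sup>L LL (\<lambda>y. (green \<alpha> x y - green \<alpha> z y) * f y)\<bar>"
    using u_diff[OF assms(1-3)] by simp
  also have "\<dots> \<le> integral\<^sup>L LL (\<lambda>y. \<bar>(green \<alpha> x y - green \<alpha> z y) * f y\<bar>)"
    by (rule integral_abs_bound)
  also have "\<dots> \<le> integral\<^sup>L LL (\<lambda>y. ((c_alpha \<alpha> * pi + 1)/2 * \<bar>x - z\<bar>) * \<bar>f y\<bar>)"
  proof (rule integral_mono)
    show "integrable LL (\<lambda>y. \<bar>(green \<alpha> x y - green \<alpha> z y) * f y\<bar>)"
      using green_int[OF assms(1) assms(2)] green_int[OF assms(1) assms(3)]
      by (auto simp: left_diff_distrib)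
    show "integrable LL (\<lambda>y. ((c_alpha \<alpha> * pi + 1)/2 * \<bar>x - z\<bar>) * \<bar>f y\<bar>)"
      using assms(1) by auto
    fix y assume "y \<in> space LL"
    then have y: "\<bar>y\<bar> \<le> pi" by auto
    have "green \<alpha> x y - green \<alpha> z y = - (1/2) * c_alpha \<alpha> * y * (x - z) - (1/2) * (\<bar>x - y\<bar> - \<bar>z - y\<bar>)"
      unfolding green_def by argo
    then have "\<bar>green \<alpha> x y - green \<alpha> z y\<bar> = \<bar>- (1/2) * c_alpha \<alpha> * y * (x - z) - (1/2) * (\<bar>x - y\<bar> - \<bar>z - y\<bar>)\<bar>"
      by simp
    also have "\<dots> \<le> (1/2) * c_alpha \<alpha> * \<bar>y\<bar> * \<bar>x - z\<bar> + (1/2) * \<bar>x - z\<bar>"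
    proof -
      have h1: "\<bar>- (1/2) * c_alpha \<alpha> * y * (x - z)\<bar> = (1/2) * c_alpha \<alpha> * \<bar>y\<bar> * \<bar>x - z\<bar>"
        using c by (simp add: abs_mult)
      have "\<bar>\<bar>x - y\<bar> - \<bar>z - y\<bar>\<bar> \<le> \<bar>x - z\<bar>" by linarith
      then have h2: "\<bar>(1/2) * (\<bar>x - y\<bar> - \<bar>z - y\<bar>)\<bar> \<le> (1/2) * \<bar>x - z\<bar>" by (simp add: abs_mult)
      show ?thesis using abs_triangle_ineq4[of "- (1/2) * c_alpha \<alpha> * y * (x - z)" "(1/2) * (\<bar>x - y\<bar> - \<bar>z - y\<bar>)"] h1 h2
        by linarith
    qed
    also have "\<dots> \<le> (c_alpha \<alpha> * pi + 1)/2 * \<bar>x - z\<bar>"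
    proof -
      have "c_alpha \<alpha> * \<bar>y\<bar> * \<bar>x - z\<bar> \<le> c_alpha \<alpha> * pi * \<bar>x - z\<bar>"
        using y c by (intro mult_right_mono mult_left_mono) auto
      moreover have "(c_alpha \<alpha> * pi + 1)/2 * \<bar>x - z\<bar> = (1/2) * (c_alpha \<alpha> * pi * \<bar>x - z\<bar>) + (1/2) * \<bar>x - z\<bar>"
        by (simp add: algebra_simps)
      moreover have "(1/2) * c_alpha \<alpha> * \<bar>y\<bar> * \<bar>x - z\<bar> = (1/2) * (c_alpha \<alpha> * \<bar>y\<bar> * \<bar>x - z\<bar>)" by simp
      ultimately show ?thesis by linarith
    qed
    finally have h: "\<bar>green \<alpha> x y - green \<alpha> z y\<bar> \<le> (c_alpha \<alpha> * pi + 1)/2 * \<bar>x - z\<bar>" .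
    show "\<bar>(green \<alpha> x y - green \<alpha> z y) * f y\<bar> \<le> ((c_alpha \<alpha> * pi + 1)/2 * \<bar>x - z\<bar>) * \<bar>f y\<bar>"
      unfolding abs_mult using mult_right_mono[OF h abs_ge_zero] by simp
  qed
  also have "\<dots> = ((c_alpha \<alpha> * pi + 1)/2 * integral\<^sup>L LL (\<lambda>y. \<bar>f y\<bar>)) * \<bar>x - z\<bar>"
    by simp
  finally show ?thesis .
qed

lemma u_cont:
  assumes "integrable LL f" "\<alpha> > 0"
  shows "continuous_on {-pi..pi} (robin_sol \<alpha> f)"
proof -
  define L where "L = (c_alpha \<alpha> * pi + 1)/2 * integral\<^sup>L LL (\<lambda>y. \<bar>f y\<bar>)"
  have "L \<ge> 0" unfolding L_def using c_pos[OF assms(2)]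
    by (intro mult_nonneg_nonneg integral_nonneg_AE) auto
  have "L-lipschitz_on {-pi..pi} (robin_sol \<alpha> f)"
    by (rule lipschitz_onI) (use u_lip[OF assms(1) _ _ assms(2)] \<open>L \<ge> 0\<close> in \<open>auto simp: dist_real_def L_def\<close>)
  then show ?thesis by (rule lipschitz_on_continuous_on)
qed

lemma u_concave:
  assumes "integrable LL f" "AE y in LL. 0 \<le> f y" "y \<in> {-pi..pi}" "\<alpha> > 0"
  shows "min (robin_sol \<alpha> f (-pi)) (robin_sol \<alpha> f pi) \<le> robin_sol \<alpha> f y"
proof -
  let ?u = "robin_sol \<alpha> f"
  have "(pi - y) * (?u y - ?u (-pi)) + (pi + y) * (?u y - ?u pi)
     = integral\<^sup>L LL (\<lambda>w. (pi - y) * ((green \<alpha> y w - green \<alpha> (-pi) w) * f w) + (pi + y) * ((green \<alpha> y w - green \<alpha> pi w) * f w))"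
    using u_diff[OF assms(1) assms(3), of "-pi" \<alpha>] u_diff[OF assms(1) assms(3), of "pi" \<alpha>]
      green_int[OF assms(1)] assms(3)
    by (simp add: left_diff_distrib)
  also have "\<dots> \<ge> 0"
  proof (rule integral_nonneg_AE)
    show "AE w in LL. 0 \<le> (pi - y) * ((green \<alpha> y w - green \<alpha> (-pi) w) * f w) + (pi + y) * ((green \<alpha> y w - green \<alpha> pi w) * f w)"
      using assms(2)
    proof (rule lebesgue_on_mono)
      fix w assume f: "0 \<le> f w" and w: "w \<in> {-pi..pi}"
      have e0: "(pi - y) * (green \<alpha> y w - green \<alpha> (-pi) w) + (pi + y) * (green \<alpha> y w - green \<alpha> pi w)
          = pi * pi - y * w - pi * \<bar>y - w\<bar>"
      proof -
        have ab: "\<bar>-pi - w\<bar> = pi + w" "\<bar>pi - w\<bar> = pi - w" using w by auto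
        have a: "2 * (green \<alpha> y w - green \<alpha> (-pi) w) = - c_alpha \<alpha> * w * (y + pi) - (\<bar>y - w\<bar> - (pi + w))"
          unfolding green_def using ab by argo
        have b: "2 * (green \<alpha> y w - green \<alpha> pi w) = - c_alpha \<alpha> * w * (y - pi) - (\<bar>y - w\<bar> - (pi - w))"
          unfolding green_def using ab by argo
        have "2 * ((pi - y) * (green \<alpha> y w - green \<alpha> (-pi) w) + (pi + y) * (green \<alpha> y w - green \<alpha> pi w))
           = (pi - y) * (2 * (green \<alpha> y w - green \<alpha> (-pi) w)) + (pi + y) * (2 * (green \<alpha> y w - green \<alpha> pi w))"
          by (simp add: algebra_simps)
        also have "\<dots> = 2 * (pi * pi - y * w - pi * \<bar>y - w\<bar>)" unfolding a b by (simp add: algebra_simps)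
        finally show ?thesis by simp
      qed
      have e: "(pi - y) * ((green \<alpha> y w - green \<alpha> (-pi) w) * f w) + (pi + y) * ((green \<alpha> y w - green \<alpha> pi w) * f w)
          = (pi * pi - y * w - pi * \<bar>y - w\<bar>) * f w"
        unfolding e0[symmetric] by (simp add: algebra_simps)
      have "0 \<le> pi * pi - y * w - pi * \<bar>y - w\<bar>"
      proof (cases "y \<le> w")
        case True
        have "0 \<le> (pi - w) * (pi + y)" using w assms(3) by auto
        moreover have "\<bar>y - w\<bar> = w - y" using True by simp
        ultimately show ?thesis by (simp add: algebra_simps)
      next
        case False
        have "0 \<le> (pi + w) * (pi - y)" using w assms(3) by auto
        moreover have "\<bar>y - w\<bar> = y - w" using False by simp
        ultimately show ?thesis by (simp add: algebra_simps)
      qed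
      then show "0 \<le> (pi - y) * ((green \<alpha> y w - green \<alpha> (-pi) w) * f w) + (pi + y) * ((green \<alpha> y w - green \<alpha> pi w) * f w)"
        unfolding e using f by simp
    qed
  qed
  finally have h: "0 \<le> (pi - y) * (?u y - ?u (-pi)) + (pi + y) * (?u y - ?u pi)" .
  show ?thesis
  proof (rule ccontr)
    assume "\<not> ?thesis"
    then have "?u y < ?u (-pi)" "?u y < ?u pi" by auto
    moreover have "pi - y \<ge> 0" "pi + y \<ge> 0" "(pi - y) + (pi + y) > 0" using assms(3) pi_gt_zero by auto
    ultimately have "(pi - y) * (?u y - ?u (-pi)) + (pi + y) * (?u y - ?u pi) < 0"
    proof -
      assume a: "?u y < ?u (-pi)" "?u y < ?u pi" "pi - y \<ge> 0" "pi + y \<ge> 0" "(pi - y) + (pi + y) > 0"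
      have n1: "(pi - y) * (?u y - ?u (-pi)) \<le> 0" using a by (intro mult_nonneg_nonpos) auto
      have n2: "(pi + y) * (?u y - ?u pi) \<le> 0" using a by (intro mult_nonneg_nonpos) auto
      show ?thesis
      proof (cases "pi - y > 0")
        case True
        then have "(pi - y) * (?u y - ?u (-pi)) < 0" using a by (intro mult_pos_neg) auto
        then show ?thesis using n2 by linarith
      next
        case False
        then have "pi + y > 0" using a by linarith
        then have "(pi + y) * (?u y - ?u pi) < 0" using a by (intro mult_pos_neg) auto
        then show ?thesis using n1 by linarith
      qed
    qed
    then show False using h by simp
  qed
qed


lemma taylor0:
  fixes x a g c b l d xg :: real
  assumes "(1+d)*xg = g*(1-c*l)"
  shows "(1+d)*(-d*x^2 - (x-a)^2 + 2*(b-c*x)*l*a) = 2*(1+d)*b*l*g - g^2*(d + 2*c*l - c^2*l^2)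
     + 2*(b*l*(1+d) - g*(d + 2*c*l - c^2*l^2))*(a-g)
     - (1+d)*((1+d)*(x-xg)^2 - 2*(1-c*l)*(x-xg)*(a-g) + (a-g)^2)"
  using assms by algebra

lemma qpos:
  fixes p1 q1 c l d :: real
  assumes "d + 2*c*l - c^2*l^2 > 0"
  shows "(1+d)*p1^2 - 2*(1-c*l)*p1*q1 + q1^2 \<ge> 0"
    and "(1+d)*p1^2 - 2*(1-c*l)*p1*q1 + q1^2 = 0 \<Longrightarrow> p1 = 0 \<and> q1 = 0"
proof -
  have e: "(1+d)*p1^2 - 2*(1-c*l)*p1*q1 + q1^2 = (q1 - (1-c*l)*p1)^2 + (d + 2*c*l - c^2*l^2)*p1^2"
    by (simp add: algebra_simps power2_eq_square)
  show "(1+d)*p1^2 - 2*(1-c*l)*p1*q1 + q1^2 \<ge> 0" unfolding e using assms by simp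
  assume "(1+d)*p1^2 - 2*(1-c*l)*p1*q1 + q1^2 = 0"
  then have z: "(q1 - (1-c*l)*p1)^2 + (d + 2*c*l - c^2*l^2)*p1^2 = 0" unfolding e .
  have "(q1 - (1-c*l)*p1)^2 \<ge> 0" "(d + 2*c*l - c^2*l^2)*p1^2 \<ge> 0" using assms by auto
  then have "(d + 2*c*l - c^2*l^2)*p1^2 = 0" "(q1 - (1-c*l)*p1)^2 = 0" using z by linarith+
  then show "p1 = 0 \<and> q1 = 0" using assms by auto
qed

locale prm =
  fixes \<alpha> l \<delta> :: real
  assumes \<alpha>: "\<alpha> > 0" and l0: "0 < l" and l1: "l < pi" and \<delta>: "0 \<le> \<delta>"
begin

definition "c = c_alpha \<alpha>"
definition "bb = 1 + \<alpha> * pi"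
definition "\<beta> = 1 - c * pi"
definition "D = \<delta> + 2*c*l - c^2*l^2"

lemma bb_pos: "bb > 0" unfolding bb_def using \<alpha> by (simp add: pos_add_strict)
lemma c_eq: "c = \<alpha> / bb" unfolding c_def bb_def c_alpha_def ..
lemma c_pos: "c > 0" unfolding c_eq using \<alpha> bb_pos by simp
lemma \<beta>_eq: "\<beta> = 1 / bb" unfolding \<beta>_def c_eq using bb_pos by (simp add: field_simps bb_def)
lemma \<beta>_pos: "\<beta> > 0" using \<beta>_eq bb_pos by simp
lemma \<beta>_le: "\<beta> \<le> 1" unfolding \<beta>_def using c_pos by simp
lemma cpi: "c * pi < 1" using \<beta>_pos unfolding \<beta>_def by simp
lemma cl: "c * l < 1"
proof -
  have "c * l < c * pi" using c_pos l1 by simp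
  then show ?thesis using cpi by simp
qed
lemma D_pos: "D > 0"
proof -
  have "c * l * (2 - c * l) > 0" using cl c_pos l0 by simp
  then show ?thesis unfolding D_def using \<delta> by (simp add: algebra_simps power2_eq_square)
qed
lemma D_ge: "\<delta> + c*l \<le> D"
proof -
  have "(c*l)*(c*l) \<le> c*l*1" using cl c_pos l0 by (intro mult_left_mono) auto
  then show ?thesis unfolding D_def by (simp add: power2_eq_square algebra_simps)
qed

lemma a0_eq: "a0 \<alpha> l \<delta> = \<beta> * l * (1+\<delta>) / D"
  unfolding a0_def \<beta>_eq D_def c_def[symmetric] bb_def by (simp add: algebra_simps)

lemma a0_pos: "a0 \<alpha> l \<delta> > 0"
  unfolding a0_eq using \<beta>_pos l0 \<delta> D_pos by simp

lemma bigD: "(pi^2 * \<delta> + 2 * pi * l - l^2) * \<alpha>^2 + 2 * (pi * \<delta> + l) * \<alpha> + \<delta> = bb^2 * D"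
proof -
  have cb: "c * bb = \<alpha>" unfolding c_eq using bb_pos by simp
  have "bb^2 * D = \<delta>*bb^2 + 2*l*(c*bb)*bb - l^2*(c*bb)^2"
    unfolding D_def by (simp add: algebra_simps power2_eq_square)
  also have "\<dots> = \<delta>*bb^2 + 2*l*\<alpha>*bb - l^2*\<alpha>^2" unfolding cb ..
  also have "\<dots> = (pi^2 * \<delta> + 2 * pi * l - l^2) * \<alpha>^2 + 2 * (pi * \<delta> + l) * \<alpha> + \<delta>"
    unfolding bb_def by (simp add: algebra_simps power2_eq_square)
  finally show ?thesis by simp
qed

lemma a0_eq2: "a0 \<alpha> l \<delta> = l * (1+\<delta>) / (bb * D)"
  unfolding a0_eq \<beta>_eq by simp

lemma poly_eq: "(pi - l) * alpha0_poly l \<delta> \<alpha> = bb * ((pi - l) * bb * D - l * (1+\<delta>))"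
proof -
  have pl: "pi - l > 0" using l1 by simp
  define A where "A = pi^2 * \<delta> + 2 * pi * l - l^2"
  define B' where "B' = 2 * (pi * \<delta> + l) * (pi - l) - pi * l * (1 + \<delta>)"
  define X where "X = B'/(pi-l)"
  define Y where "Y = (1+\<delta>)*l/(pi-l)"
  have X: "(pi-l)*X = B'" unfolding X_def using pl by simp
  have Y: "(pi-l)*Y = (1+\<delta>)*l" unfolding Y_def using pl by simp
  have "alpha0_poly l \<delta> \<alpha> = A*\<alpha>^2 + X*\<alpha> + \<delta> - Y"
    unfolding alpha0_poly_def A_def B'_def X_def Y_def by simp
  then have "(pi - l) * alpha0_poly l \<delta> \<alpha> = (pi-l)*(A*\<alpha>^2 + X*\<alpha> + \<delta> - Y)" by simp
  also have "\<dots> = (pi-l)*A*\<alpha>^2 + ((pi-l)*X)*\<alpha> + (pi-l)*\<delta> - (pi-l)*Y"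
    by (simp add: algebra_simps)
  also have "\<dots> = (pi-l)*A*\<alpha>^2 + B'*\<alpha> + (pi-l)*\<delta> - (1+\<delta>)*l" unfolding X Y ..
  also have "\<dots> = (pi-l)*((pi^2*\<delta> + 2*pi*l - l^2)*\<alpha>^2 + 2*(pi*\<delta>+l)*\<alpha> + \<delta>) - l*(1+\<delta>)*bb"
    unfolding A_def B'_def bb_def by (simp add: algebra_simps)
  also have "\<dots> = (pi-l)*(bb^2 * D) - l*(1+\<delta>)*bb" unfolding bigD ..
  finally show ?thesis by (simp add: algebra_simps power2_eq_square)
qed

lemma poly_sign: "0 < alpha0_poly l \<delta> \<alpha> \<longleftrightarrow> a0 \<alpha> l \<delta> < pi - l"
proof -
  have pl: "pi - l > 0" using l1 by simp
  have "0 < alpha0_poly l \<delta> \<alpha> \<longleftrightarrow> 0 < (pi - l) * alpha0_poly l \<delta> \<alpha>" using pl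
    by (simp add: zero_less_mult_iff)
  also have "\<dots> \<longleftrightarrow> 0 < (pi - l) * bb * D - l * (1+\<delta>)" unfolding poly_eq using bb_pos
    by (simp add: zero_less_mult_iff)
  also have "\<dots> \<longleftrightarrow> l * (1+\<delta>) < (pi - l) * (bb * D)" by (simp add: mult.assoc)
  also have "\<dots> \<longleftrightarrow> l * (1+\<delta>) / (bb * D) < pi - l" using bb_pos D_pos
    by (simp add: pos_divide_less_eq)
  finally show ?thesis unfolding a0_eq2 .
qed

end

lemma quad_root:
  fixes A B C :: real
  assumes A: "A > 0" and C: "C < 0"
  obtains r where "r > 0" "A*r^2 + B*r + C = 0" "\<And>a. a > 0 \<Longrightarrow> (A*a^2 + B*a + C > 0 \<longleftrightarrow> a > r)"
    "\<And>a. a > 0 \<Longrightarrow> (A*a^2 + B*a + C = 0 \<longleftrightarrow> a = r)"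
proof -
  define s where "s = sqrt (B^2 - 4*A*C)"
  have AC: "A * C < 0" using A C by (simp add: mult_pos_neg)
  have "B*B \<ge> 0" by simp
  moreover have "4*A*C = 4*(A*C)" by simp
  ultimately have "B*B - 4*A*C \<ge> 0" using AC by linarith
  then have nn: "B^2 - 4*A*C \<ge> 0" by (simp add: power2_eq_square)
  then have s2: "s^2 = B^2 - 4*A*C" unfolding s_def by (rule real_sqrt_pow2)
  have s0: "s \<ge> 0" unfolding s_def using nn by simp
  have sB: "s > \<bar>B\<bar>"
  proof -
    have "\<bar>B\<bar>^2 < s^2" using s2 AC by simp
    then show ?thesis using power_less_imp_less_base[of "\<bar>B\<bar>" 2 s] s0 by simp
  qed
  define r where "r = (s - B) / (2*A)"
  have r0: "r > 0" unfolding r_def using sB A by (simp add: abs_less_iff)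
  have root: "A*r^2 + B*r + C = 0"
  proof -
    have "4*A*(A*r^2 + B*r + C) = (2*A*r)^2 + 2*B*(2*A*r) + 4*A*C" by (simp add: algebra_simps power2_eq_square)
    also have "2*A*r = s - B" unfolding r_def using A by simp
    finally have "4*A*(A*r^2 + B*r + C) = (s-B)^2 + 2*B*(s-B) + 4*A*C" .
    also have "\<dots> = s^2 - B^2 + 4*A*C" by (simp add: algebra_simps power2_eq_square)
    also have "\<dots> = 0" using s2 by simp
    finally show ?thesis using A by simp
  qed
  have ArB: "A*r + B > 0"
  proof -
    have "r * (A*r + B) = - C" using root by (simp add: algebra_simps power2_eq_square)
    then have "r * (A*r + B) > 0" using C by simp
    then show ?thesis using r0 by (simp add: zero_less_mult_iff)
  qed
  have fac: "A*a^2 + B*a + C = (a - r) * (A*(a + r) + B)" for a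
    using root by (simp add: algebra_simps power2_eq_square)
  have pos: "A*(a+r) + B > 0" if "a > 0" for a using ArB A that
    by (smt (verit) mult_pos_pos distrib_left)
  show ?thesis
  proof (rule that[OF r0 root])
    fix a :: real assume a: "a > 0"
    show "A*a^2 + B*a + C > 0 \<longleftrightarrow> a > r" unfolding fac using pos[OF a]
      by (simp add: zero_less_mult_iff)
    show "A*a^2 + B*a + C = 0 \<longleftrightarrow> a = r" unfolding fac using pos[OF a] by simp
  qed
qed

context prm begin

lemma ag_iff: "alpha_g l \<delta> < \<alpha> \<longleftrightarrow> 0 < alpha0_poly l \<delta> \<alpha>"
proof -
  have pl: "pi - l > 0" using l1 by simp
  define A where "A = pi^2 * \<delta> + 2 * pi * l - l^2"
  define B where "B = (2 * (pi * \<delta> + l) * (pi - l) - pi * l * (1 + \<delta>)) / (pi - l)"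
  define C where "C = \<delta> - (1 + \<delta>) * l / (pi - l)"
  have P: "alpha0_poly l \<delta> a = A*a^2 + B*a + C" for a
    unfolding alpha0_poly_def A_def B_def C_def by simp
  have A0: "A > 0"
  proof -
    have "l * (2*pi - l) > 0" using l0 l1 by simp
    moreover have "pi^2 * \<delta> \<ge> 0" using \<delta> by simp
    ultimately show ?thesis unfolding A_def by (simp add: algebra_simps power2_eq_square)
  qed
  show ?thesis
  proof (cases "(1 + \<delta>) * l > \<delta> * (pi - l)")
    case True
    have C0: "C < 0" unfolding C_def using True pl by (simp add: field_simps)
    obtain r where r: "r > 0" "A*r^2 + B*r + C = 0" "\<And>a. a > 0 \<Longrightarrow> (A*a^2 + B*a + C > 0 \<longleftrightarrow> a > r)"
      "\<And>a. a > 0 \<Longrightarrow> (A*a^2 + B*a + C = 0 \<longleftrightarrow> a = r)"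
      using quad_root[OF A0 C0] by blast
    have "alpha0 l \<delta> = r" unfolding alpha0_def
    proof (rule the_equality)
      show "0 < r \<and> alpha0_poly l \<delta> r = 0" using r unfolding P by simp
      fix a assume "0 < a \<and> alpha0_poly l \<delta> a = 0"
      then show "a = r" using r(4) unfolding P by blast
    qed
    then have "alpha_g l \<delta> = r" unfolding alpha_g_def using True by simp
    then show ?thesis using r(3)[OF \<alpha>] unfolding P by simp
  next
    case False
    then have ag: "alpha_g l \<delta> = 0" unfolding alpha_g_def by simp
    have C0: "C \<ge> 0" unfolding C_def using False pl by (simp add: field_simps)
    have h: "(1+\<delta>)*l \<le> \<delta>*(pi-l)" using False by simp
    have "pi * ((1+\<delta>)*l) \<le> pi * (\<delta>*(pi-l))" using h by (simp add: mult_left_mono)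
    then have "pi * l * (1 + \<delta>) \<le> pi * (\<delta> * (pi - l))" by (simp add: algebra_simps)
    then have "2 * (pi * \<delta> + l) * (pi - l) - pi * l * (1 + \<delta>) \<ge> (pi - l) * (pi * \<delta> + 2 * l)"
      by (simp add: algebra_simps)
    moreover have "(pi - l) * (pi * \<delta> + 2 * l) > 0"
    proof -
      have "pi * \<delta> \<ge> 0" using \<delta> by simp
      then show ?thesis using pl l0 by (intro mult_pos_pos) auto
    qed
    ultimately have B0: "B > 0" unfolding B_def using pl by simp
    have "A * \<alpha>^2 + B * \<alpha> + C > 0" using A0 B0 C0 \<alpha>
      by (smt (verit) mult_pos_pos zero_less_power)
    then show ?thesis using ag \<alpha> unfolding P by simp
  qed
qed

end


context prm begin

definition "g = a_g \<alpha> l \<delta>"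
definition "xg = g*(1-c*l)/(1+\<delta>)"
definition "Th = Theta \<alpha> l \<delta> - (pi*l + pi^2*\<delta>/2 - l^2/2)"

lemma caseA: "alpha_g l \<delta> < \<alpha> \<Longrightarrow> g = a0 \<alpha> l \<delta>" by (simp add: g_def a_g_def)
lemma caseB: "\<not> alpha_g l \<delta> < \<alpha> \<Longrightarrow> g = pi - l" by (simp add: g_def a_g_def)

lemma g_le_a0: "g \<le> a0 \<alpha> l \<delta>"
  using caseA caseB ag_iff poly_sign by force

lemma g_le: "g \<le> pi - l"
  using caseA caseB ag_iff poly_sign by force

lemma g_pos: "g > 0"
  using caseA caseB a0_pos l1 by force

lemma V: "Th = \<beta>*l*g - g^2*D/(2*(1+\<delta>))"
proof (cases "alpha_g l \<delta> < \<alpha>")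
  case True
  have d: "1 + \<delta> > 0" using \<delta> by simp
  have "Th = (1/2) * ((1 + \<delta>) * l^2 / (bb^2 * D))"
    unfolding Th_def Theta_def using True bigD by simp
  also have "\<dots> = \<beta>*l*g/2"
    unfolding caseA[OF True] a0_eq \<beta>_eq using bb_pos D_pos d
    by (simp add: field_simps power2_eq_square)
  also have "\<dots> = \<beta>*l*g - g^2*D/(2*(1+\<delta>))"
  proof -
    have gD: "g*D = \<beta>*l*(1+\<delta>)" unfolding caseA[OF True] a0_eq using D_pos by simp
    have "g^2*D/(2*(1+\<delta>)) = g*(g*D)/(2*(1+\<delta>))" by (simp add: power2_eq_square mult.assoc)
    also have "\<dots> = g*\<beta>*l/2" unfolding gD using d by (simp add: field_simps)
    finally show ?thesis by simp
  qed
  finally show ?thesis .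
next
  case False
  have d: "1 + \<delta> > 0" using \<delta> by simp
  have e: "l^2 * c^2 - 2 * l * c - \<delta> = - D" unfolding D_def by (simp add: algebra_simps)
  have "Th = (1/2) * ((l^2 * c^2 - 2 * l * c - \<delta>) * (pi - l)^2 / (1 + \<delta>)) + l * (pi - l) / bb"
    unfolding Th_def Theta_def using False by (simp add: c_def bb_def)
  also have "\<dots> = \<beta>*l*g - g^2*D/(2*(1+\<delta>))"
    unfolding e caseB[OF False] \<beta>_eq by simp
  finally show ?thesis .
qed

lemma gap: "a \<le> pi - l \<Longrightarrow> (\<beta>*l*(1+\<delta>) - g*D)*(a - g) \<le> 0"
proof (cases "alpha_g l \<delta> < \<alpha>")
  case True
  have "\<beta>*l*(1+\<delta>) - g*D = 0" unfolding caseA[OF True] a0_eq using D_pos by simp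
  then show ?thesis by simp
next
  case False
  assume a: "a \<le> pi - l"
  have "g * D \<le> a0 \<alpha> l \<delta> * D" using g_le_a0 D_pos by (simp add: mult_right_mono)
  also have "\<dots> = \<beta>*l*(1+\<delta>)" unfolding a0_eq using D_pos by simp
  finally have "0 \<le> \<beta>*l*(1+\<delta>) - g*D" by simp
  moreover have "a - g \<le> 0" using a caseB[OF False] by simp
  ultimately show ?thesis by (simp add: mult_nonneg_nonpos)
qed

lemma xg_eq: "(1+\<delta>)*xg = g*(1-c*l)"
  unfolding xg_def using \<delta> by simp

definition "E x a = -\<delta>*x^2/2 - (x-a)^2/2 + (1 - c*(pi+x))*l*a"

lemma E_main:
  assumes a: "a \<le> pi - l"
  shows "E x a \<le> Th" and "E x a = Th \<Longrightarrow> x = xg \<and> a = g"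
proof -
  define Q where "Q = (1+\<delta>)*(x-xg)^2 - 2*(1-c*l)*(x-xg)*(a-g) + (a-g)^2"
  have d: "1 + \<delta> > 0" using \<delta> by simp
  have k: "1 - c*(pi+x) = \<beta> - c*x" unfolding \<beta>_def by (simp add: algebra_simps)
  have t: "(1+\<delta>)*(-\<delta>*x^2 - (x-a)^2 + 2*(\<beta>-c*x)*l*a) = 2*(1+\<delta>)*\<beta>*l*g - g^2*D
     + 2*(\<beta>*l*(1+\<delta>) - g*D)*(a-g) - (1+\<delta>)*Q"
    unfolding D_def Q_def by (rule taylor0[OF xg_eq])
  have E2: "-\<delta>*x^2 - (x-a)^2 + 2*(\<beta>-c*x)*l*a = 2 * E x a" unfolding E_def k by simp
  have Th2: "2*(1+\<delta>)*\<beta>*l*g - g^2*D = 2*(1+\<delta>)*Th" unfolding V using d by (simp add: field_simps)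
  have key: "2*(1+\<delta>)*(E x a - Th) = 2*(\<beta>*l*(1+\<delta>) - g*D)*(a-g) - (1+\<delta>)*Q"
    using t unfolding E2 Th2 by (simp add: algebra_simps)
  have Q0: "Q \<ge> 0" unfolding Q_def using qpos(1) D_pos unfolding D_def by blast
  have G0: "(\<beta>*l*(1+\<delta>) - g*D)*(a-g) \<le> 0" using gap[OF a] .
  have "(1+\<delta>)*Q \<ge> 0" using Q0 d by simp
  then have "2*(1+\<delta>)*(E x a - Th) \<le> 0" using key G0 by linarith
  then have "E x a - Th \<le> 0" using d by (simp add: mult_le_0_iff)
  then show "E x a \<le> Th" by simp
  assume "E x a = Th"
  then have "2*(\<beta>*l*(1+\<delta>) - g*D)*(a-g) - (1+\<delta>)*Q = 0" using key by simp
  then have "(1+\<delta>)*Q = 0" using G0 \<open>(1+\<delta>)*Q \<ge> 0\<close> by linarith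
  then have "Q = 0" using d by simp
  then have "x - xg = 0 \<and> a - g = 0" using qpos(2) D_pos unfolding Q_def D_def by blast
  then show "x = xg \<and> a = g" by simp
qed

lemma E_val: "E xg g = Th"
proof -
  have d: "1 + \<delta> > 0" using \<delta> by simp
  have k: "1 - c*(pi+xg) = \<beta> - c*xg" unfolding \<beta>_def by (simp add: algebra_simps)
  have t: "(1+\<delta>)*(-\<delta>*xg^2 - (xg-g)^2 + 2*(\<beta>-c*xg)*l*g) = 2*(1+\<delta>)*\<beta>*l*g - g^2*D
     + 2*(\<beta>*l*(1+\<delta>) - g*D)*(g-g) - (1+\<delta>)*((1+\<delta>)*(xg-xg)^2 - 2*(1-c*l)*(xg-xg)*(g-g) + (g-g)^2)"
    unfolding D_def by (rule taylor0[OF xg_eq])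
  have E2: "-\<delta>*xg^2 - (xg-g)^2 + 2*(\<beta>-c*xg)*l*g = 2 * E xg g" unfolding E_def k by simp
  have Th2: "2*(1+\<delta>)*\<beta>*l*g - g^2*D = 2*(1+\<delta>)*Th" unfolding V using d by (simp add: field_simps)
  have "(1+\<delta>) * (2 * E xg g) = 2*(1+\<delta>)*Th" using t unfolding E2 Th2 by simp
  then have "(1+\<delta>) * (E xg g - Th) = 0" by (simp add: algebra_simps)
  then show ?thesis using d by simp
qed

lemma xg_pos: "xg > 0"
  unfolding xg_def using g_pos cl \<delta> by simp

lemma g_xg: "g - xg = g*(\<delta> + c*l)/(1+\<delta>)"
  unfolding xg_def using \<delta> by (simp add: field_simps)

lemma xg_le: "xg \<le> g"
proof -
  have "g*(\<delta> + c*l)/(1+\<delta>) \<ge> 0" using g_pos c_pos l0 \<delta> by simp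
  then show ?thesis using g_xg by simp
qed

lemma g_xg_l: "g - xg \<le> l"
proof -
  have d: "1 + \<delta> > 0" using \<delta> by simp
  have dc: "\<delta> + c*l \<ge> 0" using c_pos l0 \<delta> by simp
  have "g*(\<delta> + c*l)/(1+\<delta>) \<le> a0 \<alpha> l \<delta>*(\<delta> + c*l)/(1+\<delta>)"
    using g_le_a0 dc d by (intro divide_right_mono mult_right_mono) auto
  also have "\<dots> = (a0 \<alpha> l \<delta>/(1+\<delta>))*(\<delta> + c*l)" by simp
  also have "a0 \<alpha> l \<delta>/(1+\<delta>) = \<beta>*l/D" unfolding a0_eq using d by simp
  also have "\<beta>*l/D*(\<delta> + c*l) = \<beta>*l*(\<delta> + c*l)/D" by simp
  also have "\<dots> \<le> l"
  proof -
    have "\<beta>*(\<delta> + c*l) \<le> 1*(\<delta> + c*l)" using \<beta>_le dc by (intro mult_right_mono) auto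
    also have "\<dots> \<le> D" using D_ge by simp
    finally have "l*(\<beta>*(\<delta> + c*l)) \<le> l*D" using l0 by (intro mult_left_mono) auto
    then show ?thesis using D_pos by (simp add: divide_le_eq mult.assoc mult.left_commute)
  qed
  finally show ?thesis using g_xg by simp
qed

end


lemma kap_mono_left: "y1 \<le> y2 \<Longrightarrow> y2 \<le> x \<Longrightarrow> \<bar>k\<bar> \<le> 1 \<Longrightarrow> kap x k y1 \<le> kap x k y2"
proof -
  assume a: "y1 \<le> y2" "y2 \<le> x" "\<bar>k\<bar> \<le> 1"
  have "\<bar>x - y1\<bar> = x - y1" "\<bar>x - y2\<bar> = x - y2" using a by auto
  then have "kap x k y2 - kap x k y1 = (1 + k) * (y2 - y1) / 2"
    unfolding kap_def by (simp add: field_simps)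
  moreover have "(1 + k) * (y2 - y1) \<ge> 0" using a by (intro mult_nonneg_nonneg) (auto simp: abs_le_iff)
  ultimately show ?thesis by simp
qed

lemma kap_mono_right: "x \<le> y1 \<Longrightarrow> y1 \<le> y2 \<Longrightarrow> \<bar>k\<bar> \<le> 1 \<Longrightarrow> kap x k y2 \<le> kap x k y1"
proof -
  assume a: "x \<le> y1" "y1 \<le> y2" "\<bar>k\<bar> \<le> 1"
  have "\<bar>x - y1\<bar> = y1 - x" "\<bar>x - y2\<bar> = y2 - x" using a by auto
  then have "kap x k y1 - kap x k y2 = (1 - k) * (y2 - y1) / 2"
    unfolding kap_def by (simp add: field_simps)
  moreover have "(1 - k) * (y2 - y1) \<ge> 0" using a by (intro mult_nonneg_nonneg) (auto simp: abs_le_iff)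
  ultimately show ?thesis by simp
qed

lemma kap_bal: "\<bar>x - a\<bar> \<le> l \<Longrightarrow> kap x k (a + l) - kap x k (a - l) = (x - a) + k * l"
proof -
  assume "\<bar>x - a\<bar> \<le> l"
  then have "\<bar>x - (a + l)\<bar> = a + l - x" "\<bar>x - (a - l)\<bar> = x - (a - l)" by auto
  then show ?thesis unfolding kap_def by (simp add: field_simps)
qed

lemma thresh:
  fixes x k l :: real
  assumes x: "-pi \<le> x" "x \<le> pi" and l: "0 < l" "l < pi" and k: "\<bar>k\<bar> \<le> 1"
  defines "a \<equiv> max (-pi + l) (min (pi - l) (x + k*l))"
  defines "t \<equiv> min (kap x k (a - l)) (kap x k (a + l))"
  shows "-pi + l \<le> a" "a \<le> pi - l" "\<bar>x - a\<bar> \<le> l"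
    "\<And>y. y \<in> {a-l..a+l} \<Longrightarrow> t \<le> kap x k y"
    "\<And>y. y \<in> {-pi..pi} \<Longrightarrow> y \<notin> {a-l..a+l} \<Longrightarrow> kap x k y \<le> t"
proof -
  have kl: "\<bar>k*l\<bar> \<le> l" using k l by (simp add: abs_mult mult_left_le_one_le)
  then have kl1: "k*l \<le> l" "-l \<le> k*l" by (simp_all add: abs_le_iff)
  show a1: "-pi + l \<le> a" unfolding a_def by simp
  show a2: "a \<le> pi - l" unfolding a_def using l by simp
  have lo: "x - l \<le> a"
  proof -
    have "x - l \<le> min (pi - l) (x + k*l)" by (rule min.boundedI) (use kl1 x in linarith)+
    also have "\<dots> \<le> a" unfolding a_def by (rule max.cobounded2)
    finally show ?thesis .
  qed
  have hi: "a \<le> x + l"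
    unfolding a_def
  proof (rule max.boundedI)
    show "-pi + l \<le> x + l" using x by linarith
    show "min (pi - l) (x + k*l) \<le> x + l" by (rule min.coboundedI2) (use kl1 in linarith)
  qed
  show xa: "\<bar>x - a\<bar> \<le> l" using lo hi by (simp add: abs_le_iff)
  show "t \<le> kap x k y" if y: "y \<in> {a-l..a+l}" for y
  proof (cases "y \<le> x")
    case True
    then have "kap x k (a - l) \<le> kap x k y" using y k by (intro kap_mono_left) auto
    then show ?thesis unfolding t_def by simp
  next
    case False
    then have "kap x k (a + l) \<le> kap x k y" using y k by (intro kap_mono_right) auto
    then show ?thesis unfolding t_def by simp
  qed
  show "kap x k y \<le> t" if y: "y \<in> {-pi..pi}" "y \<notin> {a-l..a+l}" for y
  proof (cases "y < a - l")
    case True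
    then have "a > -pi + l" using y by simp
    then have "a \<le> x + k*l" unfolding a_def by (auto simp: max_def min_def split: if_splits)
    then have "kap x k (a - l) \<le> kap x k (a + l)" using kap_bal[OF xa, of k] by simp
    then have tt: "t = kap x k (a - l)" unfolding t_def by simp
    have "kap x k y \<le> kap x k (a - l)" using True xa k by (intro kap_mono_left) auto
    then show ?thesis unfolding tt .
  next
    case False
    then have yy: "y > a + l" using y by auto
    then have "a < pi - l" using y by simp
    then have "a \<ge> x + k*l" unfolding a_def by (auto simp: max_def min_def split: if_splits)
    then have "kap x k (a + l) \<le> kap x k (a - l)" using kap_bal[OF xa, of k] by simp
    then have tt: "t = kap x k (a + l)" unfolding t_def by simp
    have "kap x k y \<le> kap x k (a + l)" using yy xa k by (intro kap_mono_right) auto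
    then show ?thesis unfolding tt .
  qed
qed

lemma null_kap:
  assumes "\<bar>k\<bar> < 1"
  shows "AE y in LL. kap x k y \<noteq> t"
proof -
  define F where "F = {(2*t - pi + x)/(1+k), (2*t - pi - x)/(k-1)}"
  have sub: "kap x k y = t \<Longrightarrow> y \<in> F" for y
  proof -
    assume h: "kap x k y = t"
    have k1: "1 + k \<noteq> 0" "k - 1 \<noteq> 0" using assms by (auto simp: abs_less_iff)
    show "y \<in> F"
    proof (cases "y \<le> x")
      case True
      then have "\<bar>x - y\<bar> = x - y" by simp
      then have "y + k * y = 2*t - pi + x" using h unfolding kap_def by argo
      then have "y * (1 + k) = 2*t - pi + x" by (simp add: algebra_simps)
      then show ?thesis unfolding F_def using k1 by (simp add: eq_divide_eq)
    next
      case False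
      then have "\<bar>x - y\<bar> = y - x" by simp
      then have "k * y - y = 2*t - pi - x" using h unfolding kap_def by argo
      then have "y * (k - 1) = 2*t - pi - x" by (simp add: algebra_simps)
      then show ?thesis unfolding F_def using k1 by (simp add: eq_divide_eq)
    qed
  qed
  have "F \<in> null_sets lborel" unfolding F_def by (rule finite_imp_null_set_lborel) simp
  then have "AE y in lborel. y \<notin> F" by (rule AE_not_in)
  then have "AE y in lebesgue. y \<notin> F" by (rule AE_completion)
  then have "AE y in LL. y \<notin> F"
    by (subst AE_restrict_space_iff) (auto elim: eventually_mono)
  then show ?thesis by eventually_elim (use sub in blast)
qed


lemma kap_neg: "kap (-x) (-k) (-y) = kap x k y"
  unfolding kap_def by (simp add: abs_minus_commute)

lemma int_kap_I:
  assumes "\<bar>x - a\<bar> \<le> l" "-pi \<le> a - l" "a + l \<le> pi"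
  shows "integral\<^sup>L LL (\<lambda>y. kap x k y * indicator {a-l..a+l} y) = l*pi - (l^2 + (x-a)^2)/2 + k*l*a"
proof -
  have "a - l \<le> a + l" using assms(1) by simp
  note I = int_kap[OF assms(2) this assms(3), of x k]
  have e1: "\<bar>a + l - x\<bar> = a + l - x" using assms(1) by auto
  have e2: "\<bar>a - l - x\<bar> = x - (a - l)" using assms(1) by auto
  show ?thesis unfolding I e1 e2 by (simp add: field_simps power2_eq_square)
qed

locale stp =
  fixes \<alpha> m M s :: real and f :: "real \<Rightarrow> real"
  assumes \<alpha>0: "\<alpha> > 0" and m0: "0 \<le> m" and ms: "m < s" and sM: "s < M"
    and adm: "admissible m M s f"
begin

definition "ll = pi * (s - m) / (M - m)"
definition "dd = m / (M - m)"

lemma Mm: "M - m > 0" using ms sM by simp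
lemma ll0: "0 < ll" unfolding ll_def using ms Mm by simp
lemma ll1: "ll < pi" unfolding ll_def using ms sM Mm by (simp add: divide_less_eq)
lemma dd0: "0 \<le> dd" unfolding dd_def using m0 Mm by simp
lemma ll_eq: "(M - m) * (2 * ll) = 2 * pi * (s - m)" unfolding ll_def using Mm by simp
lemma m_eq: "m = (M - m) * dd" unfolding dd_def using Mm by simp

lemma P: "prm \<alpha> ll dd" using \<alpha>0 ll0 ll1 dd0 by unfold_locales

lemma fi: "integrable LL f" using adm unfolding admissible_def by simp
lemma ae: "AE y in LL. m \<le> f y \<and> f y \<le> M" using adm unfolding admissible_def by simp
lemma intf: "integral\<^sup>L LL f = 2 * pi * s"
proof -
  have "integral\<^sup>L LL f = integral\<^sup>L LL (\<lambda>x. \<bar>f x\<bar>)"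
    by (rule integral_cong_AE) (use fi ae m0 in \<open>auto elim!: eventually_mono\<close>)
  then show ?thesis using adm unfolding admissible_def by simp
qed
lemma fpos: "AE y in LL. 0 \<le> f y" using ae by eventually_elim (use m0 in auto)

end


sublocale stp \<subseteq> P: prm \<alpha> ll dd by (rule P)

context stp begin

lemma Theta_split: "Theta \<alpha> ll dd = P.Th + (pi*ll + pi^2*dd/2 - ll^2/2)"
  unfolding P.Th_def by simp

lemma krange:
  assumes x: "x \<in> {-pi..pi}"
  shows "0 \<le> P.c * (pi + x)" "P.c * (pi + x) < 2" "x > -pi \<Longrightarrow> 0 < P.c * (pi + x)"
proof -
  show "0 \<le> P.c * (pi + x)" using P.c_pos x by simp
  have "P.c * (pi + x) \<le> P.c * (2*pi)" using P.c_pos x by (intro mult_left_mono) auto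
  also have "\<dots> < 2" using P.cpi by simp
  finally show "P.c * (pi + x) < 2" .
  show "x > -pi \<Longrightarrow> 0 < P.c * (pi + x)" using P.c_pos by simp
qed

lemma Rlem:
  assumes x0: "x0 \<in> {-pi..pi}"
    and I2: "integral\<^sup>L LL (\<lambda>y. kap x0 k0 y * indicator {p..q} y) = ll*pi - (ll^2 + (x-a)^2)/2 + k*ll*a"
    and xx: "x0^2 = x^2"
    and kk: "k = 1 - P.c * (pi + x)"
  shows "m * integral\<^sup>L LL (kap x0 k0) + (M-m) * integral\<^sup>L LL (\<lambda>y. kap x0 k0 y * indicator {p..q} y)
      = (M-m) * (Theta \<alpha> ll dd - P.Th + P.E x a)"
proof -
  have I1: "integral\<^sup>L LL (kap x0 k0) = (pi^2 - x^2)/2" using int_kap_full[OF x0] xx by simp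
  have "m * integral\<^sup>L LL (kap x0 k0) + (M-m) * integral\<^sup>L LL (\<lambda>y. kap x0 k0 y * indicator {p..q} y)
     = (M-m) * (dd * ((pi^2 - x^2)/2) + (ll*pi - (ll^2 + (x-a)^2)/2 + k*ll*a))"
  proof -
    have mm: "m * ((pi^2 - x^2)/2) = (M-m)*(dd*((pi^2-x^2)/2))" using m_eq by (metis mult.assoc)
    show ?thesis unfolding I1 I2 mm by (simp add: algebra_simps)
  qed
  also have "\<dots> = (M-m) * (Theta \<alpha> ll dd - P.Th + P.E x a)"
  proof -
    have e1: "dd * ((pi^2 - x^2)/2) = pi^2*dd/2 - dd*x^2/2" by (simp add: field_simps)
    have e2: "P.E x a = - (dd*x^2/2) - (x-a)^2/2 + k*ll*a" unfolding P.E_def kk by simp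
    have "dd * ((pi^2 - x^2)/2) + (ll*pi - (ll^2 + (x-a)^2)/2 + k*ll*a) = (pi*ll + pi^2*dd/2 - ll^2/2) + P.E x a"
      unfolding e1 e2 by (simp add: algebra_simps)
    then show ?thesis unfolding Theta_split by simp
  qed
  finally show ?thesis .
qed

lemma core:
  assumes x: "x \<in> {-pi..pi}" and k1: "\<bar>k\<bar> \<le> 1" and a: "-pi + ll \<le> a" "a \<le> pi - ll" "\<bar>x - a\<bar> \<le> ll"
    and th1: "\<And>y. y \<in> {p..q} \<Longrightarrow> t \<le> kap x0 k0 y"
    and th2: "\<And>y. y \<in> {-pi..pi} \<Longrightarrow> y \<notin> {p..q} \<Longrightarrow> kap x0 k0 y \<le> t"
    and pq: "-pi \<le> p" "p \<le> q" "q \<le> pi" "q - p = 2 * ll"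
    and x0: "x0 \<in> {-pi..pi}"
    and I2: "integral\<^sup>L LL (\<lambda>y. kap x0 k0 y * indicator {p..q} y) = ll*pi - (ll^2 + (x-a)^2)/2 + k*ll*a"
    and xx: "x0^2 = x^2"
    and kk: "k = 1 - P.c * (pi + x)"
  shows "integral\<^sup>L LL (\<lambda>y. kap x0 k0 y * f y) \<le> (M-m) * Theta \<alpha> ll dd"
    and "integral\<^sup>L LL (\<lambda>y. kap x0 k0 y * f y) = (M-m) * Theta \<alpha> ll dd \<Longrightarrow>
         x = P.xg \<and> a = P.g \<and> (AE y in LL. kap x0 k0 y = t \<or> f y = m + (M-m) * indicator {p..q} y)"
proof -
  have pq4: "(M - m) * (q - p) = 2 * pi * (s - m)" using pq(4) ll_eq by simp
  note B = bnd[OF fi ae intf pq(1-3) pq4 kap_meas kap_bnd[OF _ x0] th1 th2]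
  have R: "m * integral\<^sup>L LL (kap x0 k0) + (M-m) * integral\<^sup>L LL (\<lambda>y. kap x0 k0 y * indicator {p..q} y)
      = (M-m) * (Theta \<alpha> ll dd - P.Th + P.E x a)" by (rule Rlem[OF x0 I2 xx kk])
  have EM: "P.E x a \<le> P.Th" using P.E_main(1)[OF a(2)] .
  have "(M-m) * (Theta \<alpha> ll dd - P.Th + P.E x a) \<le> (M-m) * Theta \<alpha> ll dd"
    using EM Mm by (intro mult_left_mono) auto
  then show le: "integral\<^sup>L LL (\<lambda>y. kap x0 k0 y * f y) \<le> (M-m) * Theta \<alpha> ll dd"
    using B(1) R by linarith
  assume eq: "integral\<^sup>L LL (\<lambda>y. kap x0 k0 y * f y) = (M-m) * Theta \<alpha> ll dd"
  have "(M-m) * Theta \<alpha> ll dd \<le> (M-m) * (Theta \<alpha> ll dd - P.Th + P.E x a)"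
    using B(1) R eq by linarith
  then have "Theta \<alpha> ll dd \<le> Theta \<alpha> ll dd - P.Th + P.E x a" using Mm by simp
  then have "P.E x a = P.Th" using EM by linarith
  then have xa: "x = P.xg \<and> a = P.g" using P.E_main(2)[OF a(2)] by blast
  have "integral\<^sup>L LL (\<lambda>y. kap x0 k0 y * f y) = m * integral\<^sup>L LL (kap x0 k0) + (M-m) * integral\<^sup>L LL (\<lambda>y. kap x0 k0 y * indicator {p..q} y)"
    using eq R \<open>P.E x a = P.Th\<close> by simp
  then show "x = P.xg \<and> a = P.g \<and> (AE y in LL. kap x0 k0 y = t \<or> f y = m + (M-m) * indicator {p..q} y)"
    using B(2) xa by blast
qed


lemma Pc: "P.c = c_alpha \<alpha>" unfolding P.c_def ..

lemma side_m:
  assumes x: "x \<in> {-pi..pi}"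
  shows "robin_sol \<alpha> f x - robin_sol \<alpha> f (-pi) \<le> (M-m) * Theta \<alpha> ll dd"
    and "robin_sol \<alpha> f x - robin_sol \<alpha> f (-pi) = (M-m) * Theta \<alpha> ll dd \<Longrightarrow>
         AE y in LL. f y = m + (M-m) * indicator {P.g - ll .. P.g + ll} y"
proof -
  define k where "k = 1 - P.c * (pi + x)"
  have k1: "\<bar>k\<bar> \<le> 1" using krange[OF x] unfolding k_def by (simp add: abs_le_iff)
  define a where "a = max (-pi + ll) (min (pi - ll) (x + k*ll))"
  define t where "t = min (kap x k (a - ll)) (kap x k (a + ll))"
  have xb: "-pi \<le> x" "x \<le> pi" using x by auto
  note TH = thresh[OF xb P.l0 P.l1 k1]
  have a: "-pi + ll \<le> a" "a \<le> pi - ll" "\<bar>x - a\<bar> \<le> ll" using TH(1-3) unfolding a_def by auto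
  have th1: "\<And>y. y \<in> {a-ll..a+ll} \<Longrightarrow> t \<le> kap x k y" using TH(4) unfolding a_def t_def by blast
  have th2: "\<And>y. y \<in> {-pi..pi} \<Longrightarrow> y \<notin> {a-ll..a+ll} \<Longrightarrow> kap x k y \<le> t" using TH(5) unfolding a_def t_def by blast
  have pq: "-pi \<le> a - ll" "a - ll \<le> a + ll" "a + ll \<le> pi" "(a + ll) - (a - ll) = 2 * ll" using a P.l0 by auto
  have I2: "integral\<^sup>L LL (\<lambda>y. kap x k y * indicator {a-ll..a+ll} y) = ll*pi - (ll^2 + (x-a)^2)/2 + k*ll*a"
    by (rule int_kap_I) (use a in auto)
  note C = core[OF x k1 a th1 th2 pq x I2 refl k_def]
  have u: "robin_sol \<alpha> f x - robin_sol \<alpha> f (-pi) = integral\<^sup>L LL (\<lambda>y. kap x k y * f y)"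
    using u_minus[OF fi x, of \<alpha>] unfolding k_def Pc .
  show "robin_sol \<alpha> f x - robin_sol \<alpha> f (-pi) \<le> (M-m) * Theta \<alpha> ll dd" unfolding u by (rule C(1))
  assume "robin_sol \<alpha> f x - robin_sol \<alpha> f (-pi) = (M-m) * Theta \<alpha> ll dd"
  then have H: "x = P.xg \<and> a = P.g \<and> (AE y in LL. kap x k y = t \<or> f y = m + (M-m) * indicator {a-ll..a+ll} y)"
    using C(2) unfolding u by blast
  have xp: "-pi < x" using H P.xg_pos pi_gt_zero by linarith
  have "\<bar>k\<bar> < 1" using krange(2)[OF x] krange(3)[OF x xp] unfolding k_def by (auto simp: abs_less_iff)
  note N = null_kap[OF this, of x t]
  show "AE y in LL. f y = m + (M-m) * indicator {P.g - ll .. P.g + ll} y"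
  proof -
    have A: "AE y in LL. kap x k y = t \<or> f y = m + (M-m) * indicator {a-ll..a+ll} y" using H by blast
    from N A show ?thesis by eventually_elim (use H in auto)
  qed
qed

lemma side_p:
  assumes x: "x \<in> {-pi..pi}"
  shows "robin_sol \<alpha> f x - robin_sol \<alpha> f pi \<le> (M-m) * Theta \<alpha> ll dd"
    and "robin_sol \<alpha> f x - robin_sol \<alpha> f pi = (M-m) * Theta \<alpha> ll dd \<Longrightarrow>
         AE y in LL. f y = m + (M-m) * indicator {P.g - ll .. P.g + ll} (-y)"
proof -
  define x' where "x' = -x"
  have x': "x' \<in> {-pi..pi}" using x unfolding x'_def by auto
  define k where "k = 1 - P.c * (pi + x')"
  have k1: "\<bar>k\<bar> \<le> 1" using krange[OF x'] unfolding k_def by (simp add: abs_le_iff)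
  define a where "a = max (-pi + ll) (min (pi - ll) (x' + k*ll))"
  define t where "t = min (kap x' k (a - ll)) (kap x' k (a + ll))"
  have xb: "-pi \<le> x'" "x' \<le> pi" using x' by auto
  note TH = thresh[OF xb P.l0 P.l1 k1]
  have a: "-pi + ll \<le> a" "a \<le> pi - ll" "\<bar>x' - a\<bar> \<le> ll" using TH(1-3) unfolding a_def by auto
  have kn: "kap x (-k) y = kap x' k (-y)" for y unfolding x'_def using kap_neg[of x "-k" y] by simp
  have th1: "\<And>y. y \<in> {-a-ll..-a+ll} \<Longrightarrow> t \<le> kap x (-k) y"
  proof -
    fix y assume "y \<in> {-a-ll..-a+ll}"
    then have "-y \<in> {a-ll..a+ll}" by auto
    then show "t \<le> kap x (-k) y" unfolding kn using TH(4) unfolding a_def t_def by blast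
  qed
  have th2: "\<And>y. y \<in> {-pi..pi} \<Longrightarrow> y \<notin> {-a-ll..-a+ll} \<Longrightarrow> kap x (-k) y \<le> t"
  proof -
    fix y assume "y \<in> {-pi..pi}" "y \<notin> {-a-ll..-a+ll}"
    then have "-y \<in> {-pi..pi}" "-y \<notin> {a-ll..a+ll}" by auto
    then show "kap x (-k) y \<le> t" unfolding kn using TH(5) unfolding a_def t_def by blast
  qed
  have pq: "-pi \<le> -a - ll" "-a - ll \<le> -a + ll" "-a + ll \<le> pi" "(-a + ll) - (-a - ll) = 2 * ll" using a P.l0 by auto
  have I2: "integral\<^sup>L LL (\<lambda>y. kap x (-k) y * indicator {-a-ll..-a+ll} y) = ll*pi - (ll^2 + (x'-a)^2)/2 + k*ll*a"
  proof -
    have "integral\<^sup>L LL (\<lambda>y. kap x (-k) y * indicator {(-a)-ll..(-a)+ll} y) = ll*pi - (ll^2 + (x-(-a))^2)/2 + (-k)*ll*(-a)"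
      by (rule int_kap_I) (use a in \<open>auto simp: x'_def\<close>)
    moreover have "(x-(-a))^2 = (x'-a)^2" unfolding x'_def by (simp add: power2_eq_square algebra_simps)
    ultimately show ?thesis by simp
  qed
  have xx: "x^2 = x'^2" unfolding x'_def by simp
  note C = core[OF x' k1 a th1 th2 pq x I2 xx k_def]
  have u: "robin_sol \<alpha> f x - robin_sol \<alpha> f pi = integral\<^sup>L LL (\<lambda>y. kap x (-k) y * f y)"
    using u_plus[OF fi x, of \<alpha>] unfolding k_def Pc x'_def by simp
  show "robin_sol \<alpha> f x - robin_sol \<alpha> f pi \<le> (M-m) * Theta \<alpha> ll dd" unfolding u by (rule C(1))
  assume "robin_sol \<alpha> f x - robin_sol \<alpha> f pi = (M-m) * Theta \<alpha> ll dd"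
  then have H: "x' = P.xg \<and> a = P.g \<and> (AE y in LL. kap x (-k) y = t \<or> f y = m + (M-m) * indicator {-a-ll..-a+ll} y)"
    using C(2) unfolding u by blast
  have xp: "-pi < x'" using H P.xg_pos pi_gt_zero by linarith
  have "\<bar>-k\<bar> < 1" using krange(2)[OF x'] krange(3)[OF x' xp] unfolding k_def by (auto simp: abs_less_iff)
  note N = null_kap[OF this, of x t]
  have ind: "indicator {-a-ll..-a+ll} y = (indicator {a - ll .. a + ll} (-y) :: real)" for y
    by (auto simp: indicator_def)
  show "AE y in LL. f y = m + (M-m) * indicator {P.g - ll .. P.g + ll} (-y)"
  proof -
    have A: "AE y in LL. kap x (-k) y = t \<or> f y = m + (M-m) * indicator {-a-ll..-a+ll} y" using H by blast
    from N A show ?thesis unfolding ind by eventually_elim (use H in auto)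
  qed
qed

end


context stp begin

lemma xg_range: "P.xg \<in> {-pi..pi}" "\<bar>P.xg - P.g\<bar> \<le> ll" "-pi \<le> P.g - ll" "P.g + ll \<le> pi"
proof -
  have "0 < P.xg" "P.xg \<le> P.g" "P.g \<le> pi - ll" "P.g - P.xg \<le> ll" "0 < P.g"
    using P.xg_pos P.xg_le P.g_le P.g_xg_l P.g_pos by auto
  then show "P.xg \<in> {-pi..pi}" "\<bar>P.xg - P.g\<bar> \<le> ll" "-pi \<le> P.g - ll" "P.g + ll \<le> pi"
    using ll0 ll1 by auto
qed

lemma lin:
  assumes x0: "x0 \<in> {-pi..pi}" and pq: "-pi \<le> p" "q \<le> pi"
    and AEf: "AE y in LL. f y = m + (M-m) * indicator {p..q} y"
  shows "integral\<^sup>L LL (\<lambda>y. kap x0 k0 y * f y)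
      = m * integral\<^sup>L LL (kap x0 k0) + (M-m) * integral\<^sup>L LL (\<lambda>y. kap x0 k0 y * indicator {p..q} y)"
proof -
  have i1: "integrable LL (kap x0 k0)" by (rule int_bnd_ind[OF kap_meas kap_bnd[OF _ x0]])
  have B0: "0 \<le> pi/2 + pi + \<bar>k0\<bar>*pi/2" by simp
  have i2: "integrable LL (\<lambda>y. kap x0 k0 y * indicator {p..q} y)"
  proof (rule int_bnd_ind[where B = "pi/2 + pi + \<bar>k0\<bar>*pi/2"])
    show "(\<lambda>y. kap x0 k0 y * indicator {p..q} y) \<in> borel_measurable borel" by measurable
    show "\<bar>kap x0 k0 y * indicator {p..q} y\<bar> \<le> pi/2 + pi + \<bar>k0\<bar>*pi/2" if "y \<in> {-pi..pi}" for y
      using kap_bnd[OF that x0, of k0] B0 by (auto simp: indicator_def)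
  qed
  have "integral\<^sup>L LL (\<lambda>y. kap x0 k0 y * f y) = integral\<^sup>L LL (\<lambda>y. m * kap x0 k0 y + (M-m) * (kap x0 k0 y * indicator {p..q} y))"
  proof (rule integral_cong_AE)
    show "(\<lambda>y. kap x0 k0 y * f y) \<in> borel_measurable LL"
      using meas_borel[OF kap_meas[of x0 k0]] borel_measurable_integrable[OF fi] by measurable
    show "(\<lambda>y. m * kap x0 k0 y + (M-m) * (kap x0 k0 y * indicator {p..q} y)) \<in> borel_measurable LL"
      by (rule meas_borel) measurable
    show "AE y in LL. kap x0 k0 y * f y = m * kap x0 k0 y + (M-m) * (kap x0 k0 y * indicator {p..q} y)"
    proof (rule eventually_mono[OF AEf])
      fix y assume h: "f y = m + (M-m) * indicator {p..q} y"
      show "kap x0 k0 y * f y = m * kap x0 k0 y + (M-m) * (kap x0 k0 y * indicator {p..q} y)"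
        unfolding h by (simp add: algebra_simps)
    qed
  qed
  also have "\<dots> = m * integral\<^sup>L LL (kap x0 k0) + (M-m) * integral\<^sup>L LL (\<lambda>y. kap x0 k0 y * indicator {p..q} y)"
    using i1 i2 by simp
  finally show ?thesis .
qed

lemma val_m:
  assumes AEf: "AE y in LL. f y = m + (M-m) * indicator {P.g - ll .. P.g + ll} y"
  shows "robin_sol \<alpha> f P.xg - robin_sol \<alpha> f (-pi) = (M-m) * Theta \<alpha> ll dd"
proof -
  define k where "k = 1 - P.c * (pi + P.xg)"
  note xr = xg_range
  have u: "robin_sol \<alpha> f P.xg - robin_sol \<alpha> f (-pi) = integral\<^sup>L LL (\<lambda>y. kap P.xg k y * f y)"
    using u_minus[OF fi xr(1), of \<alpha>] unfolding k_def Pc .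
  have I2: "integral\<^sup>L LL (\<lambda>y. kap P.xg k y * indicator {P.g-ll..P.g+ll} y) = ll*pi - (ll^2 + (P.xg-P.g)^2)/2 + k*ll*P.g"
    by (rule int_kap_I) (use xr in auto)
  have "robin_sol \<alpha> f P.xg - robin_sol \<alpha> f (-pi) = (M-m) * (Theta \<alpha> ll dd - P.Th + P.E P.xg P.g)"
    unfolding u lin[OF xr(1) xr(3-4) AEf] by (rule Rlem[OF xr(1) I2 refl k_def])
  then show ?thesis unfolding P.E_val by simp
qed

lemma val_p:
  assumes AEf: "AE y in LL. f y = m + (M-m) * indicator {P.g - ll .. P.g + ll} (-y)"
  shows "robin_sol \<alpha> f (-P.xg) - robin_sol \<alpha> f pi = (M-m) * Theta \<alpha> ll dd"
proof -
  define k where "k = 1 - P.c * (pi + P.xg)"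
  note xr = xg_range
  have x: "-P.xg \<in> {-pi..pi}" using xr(1) by auto
  have AEf': "AE y in LL. f y = m + (M-m) * indicator {-P.g - ll .. -P.g + ll} y"
    using AEf by eventually_elim (auto simp: indicator_def)
  have u: "robin_sol \<alpha> f (-P.xg) - robin_sol \<alpha> f pi = integral\<^sup>L LL (\<lambda>y. kap (-P.xg) (-k) y * f y)"
    using u_plus[OF fi x, of \<alpha>] unfolding k_def Pc by simp
  have I2: "integral\<^sup>L LL (\<lambda>y. kap (-P.xg) (-k) y * indicator {-P.g-ll..-P.g+ll} y) = ll*pi - (ll^2 + (P.xg-P.g)^2)/2 + k*ll*P.g"
  proof -
    have "integral\<^sup>L LL (\<lambda>y. kap (-P.xg) (-k) y * indicator {(-P.g)-ll..(-P.g)+ll} y) = ll*pi - (ll^2 + (-P.xg-(-P.g))^2)/2 + (-k)*ll*(-P.g)"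
      by (rule int_kap_I) (use xr in auto)
    moreover have "(-P.xg-(-P.g))^2 = (P.xg-P.g)^2" by (simp add: power2_eq_square algebra_simps)
    ultimately show ?thesis by simp
  qed
  have xx: "(-P.xg)^2 = P.xg^2" by simp
  have pq: "-pi \<le> -P.g - ll" "-P.g + ll \<le> pi" using xr by auto
  have "robin_sol \<alpha> f (-P.xg) - robin_sol \<alpha> f pi = (M-m) * (Theta \<alpha> ll dd - P.Th + P.E P.xg P.g)"
    unfolding u lin[OF x pq AEf'] by (rule Rlem[OF x I2 xx k_def])
  then show ?thesis unfolding P.E_val by simp
qed

end


theorem theorem1:
  fixes \<alpha> m M s :: real and f :: "real \<Rightarrow> real"
  assumes "\<alpha> > 0" and "0 \<le> m" and "m < s" and "s < M"
    and "admissible m M s f"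
  defines "l \<equiv> pi * (s - m) / (M - m)"
    and "\<delta> \<equiv> m / (M - m)"
  defines "f0 \<equiv> (\<lambda>x. m + (M - m) * indicator {a_g \<alpha> l \<delta> - l .. a_g \<alpha> l \<delta> + l} x)"
  shows "osc (robin_sol \<alpha> f) \<le> (M - m) * Theta \<alpha> l \<delta> \<and>
         (osc (robin_sol \<alpha> f) = (M - m) * Theta \<alpha> l \<delta> \<longleftrightarrow>
           ((AE x in lebesgue_on {-pi..pi}. f x = f0 x) \<or>
            (AE x in lebesgue_on {-pi..pi}. f x = f0 (- x))))"
proof -
  interpret stp \<alpha> m M s f using assms(1-5) by unfold_locales
  have lE: "l = ll" unfolding l_def ll_def ..
  have dE: "\<delta> = dd" unfolding \<delta>_def dd_def ..
  have gE: "a_g \<alpha> ll dd = P.g" unfolding P.g_def ..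
  have f0E: "f0 = (\<lambda>x. m + (M - m) * indicator {P.g - ll .. P.g + ll} x)" unfolding f0_def lE dE gE ..
  let ?u = "robin_sol \<alpha> f"
  have cont: "continuous_on {-pi..pi} ?u" by (rule u_cont[OF fi \<alpha>0])
  obtain x1 where x1: "x1 \<in> {-pi..pi}" "\<And>y. y \<in> {-pi..pi} \<Longrightarrow> ?u y \<le> ?u x1"
    using continuous_attains_sup[OF compact_Icc _ cont] by auto
  obtain x2 where x2: "x2 \<in> {-pi..pi}" "\<And>y. y \<in> {-pi..pi} \<Longrightarrow> ?u x2 \<le> ?u y"
    using continuous_attains_inf[OF compact_Icc _ cont] by auto
  have sup: "Sup (?u ` {-pi..pi}) = ?u x1" by (rule cSup_eq_maximum) (use x1 in auto)
  have inf: "Inf (?u ` {-pi..pi}) = ?u x2" by (rule cInf_eq_minimum) (use x2 in auto)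
  have oscE: "osc ?u = ?u x1 - ?u x2" unfolding osc_def sup inf ..
  have mn: "min (?u (-pi)) (?u pi) \<le> ?u x2" by (rule u_concave[OF fi fpos x2(1) \<alpha>0])
  have le1: "?u x2 \<le> ?u (-pi)" "?u x2 \<le> ?u pi" using x2(2) by auto
  have cases: "?u x2 = ?u (-pi) \<or> ?u x2 = ?u pi" using mn le1 by linarith
  have bound: "osc ?u \<le> (M - m) * Theta \<alpha> ll dd"
    using cases side_m(1)[OF x1(1)] side_p(1)[OF x1(1)] unfolding oscE by auto
  have fwd: "osc ?u = (M - m) * Theta \<alpha> ll dd \<Longrightarrow>
      (AE x in lebesgue_on {-pi..pi}. f x = f0 x) \<or> (AE x in lebesgue_on {-pi..pi}. f x = f0 (- x))"
  proof -
    assume eq: "osc ?u = (M - m) * Theta \<alpha> ll dd"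
    show ?thesis
    proof (cases "?u x2 = ?u (-pi)")
      case True
      then have "?u x1 - ?u (-pi) = (M - m) * Theta \<alpha> ll dd" using eq oscE by simp
      from side_m(2)[OF x1(1) this] show ?thesis unfolding f0E by simp
    next
      case False
      then have "?u x2 = ?u pi" using cases by simp
      then have "?u x1 - ?u pi = (M - m) * Theta \<alpha> ll dd" using eq oscE by simp
      from side_p(2)[OF x1(1) this] show ?thesis unfolding f0E by simp
    qed
  qed
  have bwd: "(AE x in lebesgue_on {-pi..pi}. f x = f0 x) \<or> (AE x in lebesgue_on {-pi..pi}. f x = f0 (- x))
      \<Longrightarrow> osc ?u = (M - m) * Theta \<alpha> ll dd"
  proof -
    assume h: "(AE x in lebesgue_on {-pi..pi}. f x = f0 x) \<or> (AE x in lebesgue_on {-pi..pi}. f x = f0 (- x))"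
    have "(M - m) * Theta \<alpha> ll dd \<le> osc ?u"
    proof (cases "AE x in lebesgue_on {-pi..pi}. f x = f0 x")
      case True
      then have v: "?u P.xg - ?u (-pi) = (M - m) * Theta \<alpha> ll dd" using val_m unfolding f0E by simp
      have "?u P.xg \<le> ?u x1" using x1(2) xg_range(1) by simp
      then show ?thesis using v le1 oscE by linarith
    next
      case False
      then have "AE x in lebesgue_on {-pi..pi}. f x = f0 (- x)" using h by simp
      then have v: "?u (-P.xg) - ?u pi = (M - m) * Theta \<alpha> ll dd" using val_p unfolding f0E by simp
      have "-P.xg \<in> {-pi..pi}" using xg_range(1) by auto
      then have "?u (-P.xg) \<le> ?u x1" using x1(2) by simp
      then show ?thesis using v le1 oscE by linarith
    qed
    then show ?thesis using bound by simp
  qed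
  show ?thesis unfolding lE dE using bound fwd bwd by blast
qed


end
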